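(* Let $V$ be a Hausdorff topological vector space over $\mathbb{R}$ whose topology is weak, and let $A\subseteq V\setminus\{0\}$. The following are equivalent: (i) $A$ is topologically linearly independent; (ii) $A$ is topologically independent; (iii) $A$ is absolutely Cauchy summable and minimal; (iv) the map $\mathbb{Z}^{(A)}\to\langle A\rangle$, $(z_a)_{a\in A}\mapsto\sum_{a\in A}z_a a$, is an isomorphism of topological groups; (v) the map $\mathbb{R}^{(A)}\to\langle A\rangle_{\mathbb{R}}$, $(r_a)_{a\in A}\mapsto\sum_{a\in A}r_a a$, is an isomorphism of topological vector spaces.
   Context: The topology of a topological vector space $X$ is weak if it coincides with the coarsest topology making all continuous linear functionals on $X$ continuous. $\langle A\rangle$ is the additive subgroup and $\langle A\rangle_{\mathbb{R}}$ the linear span generated by $A$, both with the subspace topology. $\mathbb{Z}^{(A)}$ (resp. $\mathbb{R}^{(A)}$) is the set of finitely supported functions $A\to\mathbb{Z}$ (resp. $A\to\mathbb{R}$) with the topology induced from the product topology of $\mathbb{Z}^A$ ($\mathbb{Z}$ discrete) resp. $\mathbb{R}^A$. A subset $A\subseteq V\setminus\{0\}$ is topologically linearly independent if for every neighborhood $W$ of $0$ there is a neighborhood $U$ of $0$ such that for every finite $F\subseteq A$ and reals $\{r_a: a\in F\}$, $\sum_{a\in F}r_a a\in U$ implies $r_a a\in W$ for all $a\in F$; it is topologically independent if the same holds with integers $z_a$ in place of reals. $A$ is minimal if $a\notin\overline{\langle A\setminus\{a\}\rangle_{\mathbb{R}}}$ for every $a\in A$. $A$ is absolutely Cauchy summable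 if for every neighborhood $V_0$ of $0$ there is a finite $F\subseteq A$ with $\langle A\setminus F\rangle\subseteq V_0$. *)

theory Defs
  imports "HOL-Analysis.Analysis"
begin

definition tvs_ops_continuous :: "'a::{real_vector,topological_space} itself \<Rightarrow> bool" where
  "tvs_ops_continuous _ \<longleftrightarrow>
     continuous_on UNIV (\<lambda>p::'a \<times> 'a. fst p + snd p) \<and>
     continuous_on UNIV (\<lambda>p::real \<times> 'a. fst p *\<^sub>R snd p)"

definition cont_lin_functional :: "('a::{real_vector,topological_space} \<Rightarrow> real) \<Rightarrow> bool" where
  "cont_lin_functional f \<longleftrightarrow> linear f \<and> continuous_on UNIV f"

definition weak_topology_tvs :: "'a::{real_vector,topological_space} itself \<Rightarrow> bool" where
  "weak_topology_tvs _ \<longleftrightarrow>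
     (euclidean :: 'a topology) =
       topology_generated_by {f -` U | f U. cont_lin_functional (f::'a \<Rightarrow> real) \<and> open U}"

definition nbhd0 :: "'a::{real_vector,topological_space} set \<Rightarrow> bool" where
  "nbhd0 W \<longleftrightarrow> (\<exists>U. open U \<and> 0 \<in> U \<and> U \<subseteq> W)"

definition int_span :: "'a::real_vector set \<Rightarrow> 'a set" where
  "int_span A = {(\<Sum>a\<in>F. of_int (z a) *\<^sub>R a) | F z. finite F \<and> F \<subseteq> A}"

definition top_lin_indep :: "'a::{real_vector,topological_space} set \<Rightarrow> bool" where
  "top_lin_indep A \<longleftrightarrow>
     (\<forall>W. nbhd0 W \<longrightarrow> (\<exists>U. nbhd0 U \<and>
        (\<forall>F (r::'a \<Rightarrow> real). finite F \<and> F \<subseteq> A \<and> (\<Sum>a\<in>F. r a *\<^sub>R a) \<in> U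
            \<longrightarrow> (\<forall>a\<in>F. r a *\<^sub>R a \<in> W))))"

definition top_indep :: "'a::{real_vector,topological_space} set \<Rightarrow> bool" where
  "top_indep A \<longleftrightarrow>
     (\<forall>W. nbhd0 W \<longrightarrow> (\<exists>U. nbhd0 U \<and>
        (\<forall>F (z::'a \<Rightarrow> int). finite F \<and> F \<subseteq> A \<and> (\<Sum>a\<in>F. of_int (z a) *\<^sub>R a) \<in> U
            \<longrightarrow> (\<forall>a\<in>F. of_int (z a) *\<^sub>R a \<in> W))))"

definition minimal_set :: "'a::{real_vector,topological_space} set \<Rightarrow> bool" where
  "minimal_set A \<longleftrightarrow> (\<forall>a\<in>A. a \<notin> closure (span (A - {a})))"

definition abs_cauchy_summable :: "'a::{real_vector,topological_space} set \<Rightarrow> bool" where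
  "abs_cauchy_summable A \<longleftrightarrow>
     (\<forall>V0. nbhd0 V0 \<longrightarrow> (\<exists>F. finite F \<and> F \<subseteq> A \<and> int_span (A - F) \<subseteq> V0))"

text \<open>Finitely supported functions A \<rightarrow> Z (resp. A \<rightarrow> R), represented as functions on the
whole type vanishing outside A, with the topology induced by the product topology of
Z^A (Z discrete) resp. R^A.  Coordinates outside A carry the one-point space {0}, so the
full product is homeomorphic to Z^A resp. R^A.\<close>
definition fin_supp :: "'a set \<Rightarrow> ('a \<Rightarrow> 'b::zero) set" where
  "fin_supp A = {f. (\<forall>a. a \<notin> A \<longrightarrow> f a = 0) \<and> finite {a. f a \<noteq> 0}}"

definition Z_fin_top :: "'a set \<Rightarrow> ('a \<Rightarrow> int) topology" where
  "Z_fin_top A = subtopology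
     (product_topology (\<lambda>a. if a \<in> A then discrete_topology UNIV else discrete_topology {0}) UNIV)
     (fin_supp A)"

definition R_fin_top :: "'a set \<Rightarrow> ('a \<Rightarrow> real) topology" where
  "R_fin_top A = subtopology
     (product_topology (\<lambda>a. if a \<in> A then euclideanreal else subtopology euclideanreal {0}) UNIV)
     (fin_supp A)"

definition Z_sum_map :: "('a \<Rightarrow> int) \<Rightarrow> 'a::real_vector" where
  "Z_sum_map z = (\<Sum>a\<in>{a. z a \<noteq> 0}. of_int (z a) *\<^sub>R a)"

definition R_sum_map :: "('a \<Rightarrow> real) \<Rightarrow> 'a::real_vector" where
  "R_sum_map r = (\<Sum>a\<in>{a. r a \<noteq> 0}. r a *\<^sub>R a)"

definition Z_sum_iso :: "'a::{real_vector,topological_space} set \<Rightarrow> bool" where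
  "Z_sum_iso A \<longleftrightarrow>
     (\<forall>z\<in>fin_supp A. \<forall>w\<in>fin_supp A. Z_sum_map (\<lambda>a. z a + w a) = Z_sum_map z + Z_sum_map w) \<and>
     homeomorphic_map (Z_fin_top A) (subtopology euclidean (int_span A)) Z_sum_map"

definition R_sum_iso :: "'a::{real_vector,topological_space} set \<Rightarrow> bool" where
  "R_sum_iso A \<longleftrightarrow>
     (\<forall>r\<in>fin_supp A. \<forall>s\<in>fin_supp A. R_sum_map (\<lambda>a. r a + s a) = R_sum_map r + R_sum_map s) \<and>
     (\<forall>c. \<forall>r\<in>fin_supp A. R_sum_map (\<lambda>a. c * r a) = c *\<^sub>R R_sum_map r) \<and>
     homeomorphic_map (R_fin_top A) (subtopology euclidean (span A)) R_sum_map"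

end

theory Submission
  imports Defs
begin

definition Nb :: "('a::{real_vector,topological_space} \<Rightarrow> real) set \<Rightarrow> 'a \<Rightarrow> real \<Rightarrow> 'a set" where
  "Nb F x e = {y. \<forall>f\<in>F. \<bar>f y - f x\<bar> < e}"

lemma open_Nb:
  assumes "finite F" "\<forall>f\<in>F. cont_lin_functional f"
  shows "open (Nb F x e)"
proof -
  have "Nb F x e = UNIV \<inter> \<Inter> ((\<lambda>f. f -` {t. \<bar>t - f x\<bar> < e}) ` F)"
    unfolding Nb_def by auto
  moreover have "open (f -` {t. \<bar>t - f x\<bar> < e})" if "f \<in> F" for f
  proof -
    have "open {t::real. \<bar>t - f x\<bar> < e}"
      using open_ball[of "f x" e] by (simp add: ball_def dist_real_def abs_minus_commute)
    then show ?thesis using assms that unfolding cont_lin_functional_def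
      using open_vimage by blast
  qed
  ultimately show ?thesis using assms by (simp add: open_Inter)
qed

definition goodnb :: "'a::{real_vector,topological_space} set \<Rightarrow> bool" where
  "goodnb S0 \<longleftrightarrow> (\<forall>x\<in>S0. \<exists>F e. finite F \<and> (\<forall>f\<in>F. cont_lin_functional f) \<and> e > 0 \<and> Nb F x e \<subseteq> S0)"

lemma goodnb_Int:
  assumes "goodnb a" "goodnb b" shows "goodnb (a \<inter> b)"
  unfolding goodnb_def
proof
  fix x assume x: "x \<in> a \<inter> b"
  have xa: "x \<in> a" and xb: "x \<in> b" using x by auto
  obtain F1 e1 where 1: "finite F1" "\<forall>f\<in>F1. cont_lin_functional f" "e1 > 0" "Nb F1 x e1 \<subseteq> a"
    using bspec[OF assms(1)[unfolded goodnb_def] xa] by (elim exE conjE)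
  obtain F2 e2 where 2: "finite F2" "\<forall>f\<in>F2. cont_lin_functional f" "e2 > 0" "Nb F2 x e2 \<subseteq> b"
    using bspec[OF assms(2)[unfolded goodnb_def] xb] by (elim exE conjE)
  have "Nb (F1 \<union> F2) x (min e1 e2) \<subseteq> Nb F1 x e1" "Nb (F1 \<union> F2) x (min e1 e2) \<subseteq> Nb F2 x e2"
    unfolding Nb_def by auto
  then have "Nb (F1 \<union> F2) x (min e1 e2) \<subseteq> a \<inter> b" using 1(4) 2(4) by blast
  moreover have "finite (F1 \<union> F2)" "\<forall>f\<in>F1 \<union> F2. cont_lin_functional f" "min e1 e2 > 0"
    using 1 2 by auto
  ultimately show "\<exists>F e. finite F \<and> (\<forall>f\<in>F. cont_lin_functional f) \<and> e > 0 \<and> Nb F x e \<subseteq> a \<inter> b"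
    by (intro exI[of _ "F1 \<union> F2"] exI[of _ "min e1 e2"] conjI)
qed

lemma goodnb_UN:
  assumes "\<And>k. k \<in> K \<Longrightarrow> goodnb k" shows "goodnb (\<Union>K)"
  unfolding goodnb_def
proof
  fix x assume "x \<in> \<Union>K"
  then obtain k where k: "k \<in> K" "x \<in> k" by blast
  then obtain F e where F: "finite F" "\<forall>f\<in>F. cont_lin_functional f" "e > 0" "Nb F x e \<subseteq> k"
    using bspec[OF assms[OF k(1), unfolded goodnb_def] k(2)] by (elim exE conjE)
  have "k \<subseteq> \<Union>K" using k(1) by blast
  then have "Nb F x e \<subseteq> \<Union>K" using F(4) by (rule_tac order_trans) 
  then show "\<exists>F e. finite F \<and> (\<forall>f\<in>F. cont_lin_functional f) \<and> e > 0 \<and> Nb F x e \<subseteq> \<Union>K"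
    using F(1-3) by (intro exI[of _ F] exI[of _ e] conjI)
qed

lemma goodnb_basis:
  assumes "cont_lin_functional f" "open U" shows "goodnb (f -` U)"
  unfolding goodnb_def
proof
  fix x assume "x \<in> f -` U"
  then have "f x \<in> U" by simp
  then obtain e where e: "e > 0" "ball (f x) e \<subseteq> U" using assms(2) open_contains_ball by blast
  have "Nb {f} x e \<subseteq> f -` U"
  proof
    fix y assume "y \<in> Nb {f} x e"
    then have "\<bar>f y - f x\<bar> < e" unfolding Nb_def by simp
    then have "f y \<in> ball (f x) e" by (simp add: dist_real_def abs_minus_commute)
    then show "y \<in> f -` U" using e(2) by blast
  qed
  moreover have "finite {f}" "\<forall>g\<in>{f}. cont_lin_functional g" using assms(1) by auto
  ultimately show "\<exists>F e. finite F \<and> (\<forall>f\<in>F. cont_lin_functional f) \<and> e > 0 \<and> Nb F x e \<subseteq> f -` U"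
    using e(1) by (intro exI[of _ "{f}"] exI[of _ e] conjI)
qed

lemma weak_basis_aux:
  assumes "generate_topology_on {f -` U | f U. cont_lin_functional (f::'a::{real_vector,topological_space} \<Rightarrow> real) \<and> open U} S0"
  shows "goodnb S0"
  using assms
proof (induction rule: generate_topology_on.induct)
  case Empty
  then show ?case by (simp add: goodnb_def)
next
  case (Int a b)
  then show ?case using goodnb_Int by blast
next
  case (UN K)
  then show ?case using goodnb_UN by blast
next
  case (Basis s)
  then obtain f U where s: "s = f -` U" "cont_lin_functional f" "open U" by blast
  then show ?case using goodnb_basis by blast
qed

lemma weak_basis:
  assumes "weak_topology_tvs TYPE('a::{real_vector,topological_space})"
    and "open (S0::'a set)" "x \<in> S0"
  shows "\<exists>F e. finite F \<and> (\<forall>f\<in>F. cont_lin_functional f) \<and> e > 0 \<and> Nb F x e \<subseteq> S0"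
proof -
  have "openin (euclidean::'a topology) S0" using assms(2) by simp
  then have "generate_topology_on {f -` U | f U. cont_lin_functional (f::'a \<Rightarrow> real) \<and> open U} S0"
    using assms(1) unfolding weak_topology_tvs_def
    by (simp add: openin_topology_generated_by_iff)
  then have "goodnb S0" by (rule weak_basis_aux)
  then show ?thesis using bspec[OF _ assms(3)] unfolding goodnb_def by simp
qed

lemma clf_linear: "cont_lin_functional f \<Longrightarrow> linear f"
  by (simp add: cont_lin_functional_def)

lemma clf_sum: "cont_lin_functional f \<Longrightarrow> f (\<Sum>a\<in>F. c a *\<^sub>R a) = (\<Sum>a\<in>F. c a * f a)"
  using clf_linear[of f] by (simp add: linear_sum linear_scale)

lemma Nb0: "\<forall>f\<in>F. cont_lin_functional f \<Longrightarrow> Nb F 0 e = {y. \<forall>f\<in>F. \<bar>f y\<bar> < e}"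
  unfolding Nb_def using clf_linear linear_0 by fastforce

lemma nbhd0_Nb:
  assumes "finite F" "\<forall>f\<in>F. cont_lin_functional f" "e > 0"
  shows "nbhd0 (Nb F 0 e)"
  unfolding nbhd0_def using open_Nb[OF assms(1,2)] assms(3)
  by (intro exI[of _ "Nb F 0 e"] conjI) (simp_all add: Nb_def)

lemma nbhd0_basis:
  assumes "weak_topology_tvs TYPE('a::{real_vector,topological_space})"
    and "nbhd0 (W::'a set)"
  shows "\<exists>F e. finite F \<and> (\<forall>f\<in>F. cont_lin_functional f) \<and> e > 0 \<and> {y. \<forall>f\<in>F. \<bar>f y\<bar> < e} \<subseteq> W"
proof -
  obtain U where U: "open U" "0 \<in> U" "U \<subseteq> W" using assms(2) unfolding nbhd0_def by (elim exE conjE)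
  obtain F e where F: "finite F" "\<forall>f\<in>F. cont_lin_functional f" "e > 0" "Nb F 0 e \<subseteq> U"
    using weak_basis[OF assms(1) U(1,2)] by (elim exE conjE)
  have "{y. \<forall>f\<in>F. \<bar>f y\<bar> < e} \<subseteq> W" using F(4) U(3) Nb0[OF F(2)] by simp
  then show ?thesis using F(1-3) by (intro exI[of _ F] exI[of _ e] conjI)
qed

lemma sep_functional:
  assumes "weak_topology_tvs TYPE('a::{real_vector,t2_space})"
    and "(a::'a) \<noteq> 0"
  shows "\<exists>f. cont_lin_functional f \<and> f a \<noteq> 0"
proof -
  obtain U where U: "open U" "0 \<in> U" "a \<notin> U" using t1_space[OF assms(2)[symmetric]] by (elim exE conjE)
  have nU: "nbhd0 U" unfolding nbhd0_def using U by (intro exI[of _ U]) simp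
  obtain F e where F: "finite F" "\<forall>f\<in>F. cont_lin_functional f" "e > 0" "{y. \<forall>f\<in>F. \<bar>f y\<bar> < e} \<subseteq> U"
    using nbhd0_basis[OF assms(1) nU] by (elim exE conjE)
  have "\<not> (\<forall>f\<in>F. \<bar>f a\<bar> < e)"
  proof
    assume "\<forall>f\<in>F. \<bar>f a\<bar> < e"
    then have "a \<in> {y. \<forall>f\<in>F. \<bar>f y\<bar> < e}" by simp
    then show False using F(4) U(3) by (simp add: subset_iff)
  qed
  then obtain f where "f \<in> F" "\<not> \<bar>f a\<bar> < e" by auto
  then have "f a \<noteq> 0" using F(3) by auto
  then show ?thesis using F(2) \<open>f \<in> F\<close> by auto
qed

lemma cont_into_weak:
  assumes "weak_topology_tvs TYPE('a::{real_vector,topological_space})"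
    and "\<And>g. cont_lin_functional g \<Longrightarrow> continuous_map X euclideanreal (\<lambda>x. g (h x))"
  shows "continuous_map X (euclidean::'a topology) h"
proof -
  let ?S = "{f -` U | f U. cont_lin_functional (f::'a \<Rightarrow> real) \<and> open U}"
  have "openin X {x \<in> topspace X. h x \<in> U}" if "generate_topology_on ?S U" for U
    using that
  proof (induction rule: generate_topology_on.induct)
    case Empty
    then show ?case by simp
  next
    case (Int a b)
    have "{x \<in> topspace X. h x \<in> a \<inter> b} = {x \<in> topspace X. h x \<in> a} \<inter> {x \<in> topspace X. h x \<in> b}" by auto
    then show ?case using Int.IH by auto
  next
    case (UN K)
    have "{x \<in> topspace X. h x \<in> \<Union>K} = (\<Union>k\<in>K. {x \<in> topspace X. h x \<in> k})" by auto
    then show ?case using UN.IH by auto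
  next
    case (Basis s)
    then obtain f U where s: "s = f -` U" "cont_lin_functional f" "open U" by blast
    have "openin X {x \<in> topspace X. f (h x) \<in> U}"
      using assms(2)[OF s(2)] s(3) unfolding continuous_map by auto
    then show ?case using s(1) by simp
  qed
  note gen = this
  show ?thesis
    unfolding continuous_map
  proof (intro conjI allI impI)
    show "h ` topspace X \<subseteq> topspace euclidean" by simp
    fix U :: "'a set" assume "openin euclidean U"
    then have "openin (topology_generated_by ?S) U"
      using assms(1) unfolding weak_topology_tvs_def by simp
    then have "generate_topology_on ?S U" by (rule openin_topology_generated_by)
    then show "openin X {x \<in> topspace X. h x \<in> U}" by (rule gen)
  qed
qed



lemma floor_same_close:
  fixes x y :: real and M :: nat
  assumes "M > 0" "\<lfloor>x * M\<rfloor> = \<lfloor>y * M\<rfloor>"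
  shows "\<bar>x - y\<bar> < 1 / M"
proof -
  have "\<bar>x * M - y * M\<bar> < 1"
  proof -
    have a: "of_int \<lfloor>x*M\<rfloor> \<le> x*M" "x*M < of_int \<lfloor>x*M\<rfloor> + 1" by linarith+
    have b: "of_int \<lfloor>y*M\<rfloor> \<le> y*M" "y*M < of_int \<lfloor>y*M\<rfloor> + 1" by linarith+
    show ?thesis using a b assms(2) by (simp only: abs_less_iff) linarith
  qed
  then have "\<bar>x - y\<bar> * M < 1" by (simp add: left_diff_distrib[symmetric] abs_mult)
  then show ?thesis using assms(1) by (simp add: field_simps)
qed

lemma dirichlet:
  fixes r :: "'b \<Rightarrow> real"
  assumes "finite I" "\<eta> > 0"
  shows "\<exists>q::nat. q \<ge> 1 \<and> (\<exists>z::'b \<Rightarrow> int. \<forall>i\<in>I. \<bar>real q * r i - real_of_int (z i)\<bar> < \<eta>)"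
proof -
  obtain M :: nat where M: "M > 0" "1 / M < \<eta>"
  proof -
    obtain M where "inverse (real (Suc M)) < \<eta>" using reals_Archimedean[OF assms(2)] by (elim exE)
    then show ?thesis using that[of "Suc M"] by (simp add: inverse_eq_divide)
  qed
  define lab where "lab n = restrict (\<lambda>i. \<lfloor>frac (real n * r i) * M\<rfloor>) I" for n :: nat
  have "lab n \<in> PiE I (\<lambda>_. {0..<int M})" for n
  proof -
    have "\<lfloor>frac (real n * r i) * M\<rfloor> \<in> {0..<int M}" for i
    proof -
      have "0 \<le> frac (real n * r i) * M" "frac (real n * r i) * M < M"
        using frac_lt_1[of "real n * r i"] frac_ge_0[of "real n * r i"] M(1) by auto
      then show ?thesis by (simp add: floor_less_iff)
    qed
    then show ?thesis unfolding lab_def by auto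
  qed
  then have "range lab \<subseteq> PiE I (\<lambda>_. {0..<int M})" by auto
  moreover have "finite (PiE I (\<lambda>_. {0..<int M}))" by (rule finite_PiE[OF assms(1)]) simp
  ultimately have "finite (range lab)" by (rule finite_subset)
  then have "\<not> inj lab" using finite_imageD infinite_UNIV_nat by blast
  then obtain n1 n2 where n: "lab n1 = lab n2" "n1 \<noteq> n2" unfolding inj_def by blast
  have key: "\<exists>q::nat. q \<ge> 1 \<and> (\<exists>z::'b \<Rightarrow> int. \<forall>i\<in>I. \<bar>real q * r i - real_of_int (z i)\<bar> < \<eta>)"
    if "lab n1 = lab n2" "n1 < n2" for n1 n2
  proof -
    define z where "z i = \<lfloor>real n2 * r i\<rfloor> - \<lfloor>real n1 * r i\<rfloor>" for i
    have "\<bar>real (n2 - n1) * r i - real_of_int (z i)\<bar> < \<eta>" if "i \<in> I" for i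
    proof -
      have "\<lfloor>frac (real n2 * r i) * M\<rfloor> = \<lfloor>frac (real n1 * r i) * M\<rfloor>"
        using fun_cong[OF \<open>lab n1 = lab n2\<close>, of i] \<open>i \<in> I\<close> unfolding lab_def by simp
      then have "\<bar>frac (real n2 * r i) - frac (real n1 * r i)\<bar> < 1 / M"
        using floor_same_close M(1) by blast
      moreover have "real (n2 - n1) * r i - real_of_int (z i) = frac (real n2 * r i) - frac (real n1 * r i)"
        using \<open>n1 < n2\<close> unfolding z_def frac_def by (simp add: of_nat_diff algebra_simps)
      ultimately show ?thesis using M(2) by simp
    qed
    then show ?thesis using \<open>n1 < n2\<close> by (intro exI[of _ "n2 - n1"] conjI exI[of _ z]) auto
  qed
  show ?thesis
  proof (cases "n1 < n2")
    case True then show ?thesis using key n by blast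
  next
    case False then have "n2 < n1" using n(2) by simp
    then show ?thesis using key n(1)[symmetric] by blast
  qed
qed


lemma lin_dep_kernel:
  fixes F :: "('a::real_vector \<Rightarrow> real) set" and v :: "'i \<Rightarrow> 'a"
  assumes "finite F" "\<forall>f\<in>F. linear f" "finite I" "card I > card F"
  shows "\<exists>r. (\<exists>i\<in>I. r i \<noteq> 0) \<and> (\<forall>f\<in>F. f (\<Sum>i\<in>I. r i *\<^sub>R v i) = 0)"
  using assms
proof (induction F arbitrary: I v rule: finite_induct)
  case empty
  then have "I \<noteq> {}" by auto
  then obtain i where "i \<in> I" by auto
  then show ?case by (intro exI[of _ "\<lambda>_. 1"] conjI) auto
next
  case (insert h F)
  have lh: "linear h" and lF: "\<forall>f\<in>F. linear f" using insert.prems(1) by auto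
  have cardI: "card I > card F + 1" using insert.prems(3) insert.hyps by simp
  show ?case
  proof (cases "\<forall>i\<in>I. h (v i) = 0")
    case True
    obtain r where r: "\<exists>i\<in>I. r i \<noteq> 0" "\<forall>f\<in>F. f (\<Sum>i\<in>I. r i *\<^sub>R v i) = 0"
      using insert.IH[OF lF insert.prems(2)] cardI by (meson less_trans less_add_one) 
    have "h (\<Sum>i\<in>I. r i *\<^sub>R v i) = 0"
      using True by (simp add: linear_sum[OF lh] linear_cmul[OF lh])
    then show ?thesis using r by (intro exI[of _ r]) auto
  next
    case False
    then obtain i0 where i0: "i0 \<in> I" "h (v i0) \<noteq> 0" by auto
    define I' where "I' = I - {i0}"
    define v' where "v' i = v i - (h (v i) / h (v i0)) *\<^sub>R v i0" for i
    have fI': "finite I'" using insert.prems(2) I'_def by simp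
    have "card I' = card I - 1" using i0(1) insert.prems(2) I'_def by simp
    then have cI': "card I' > card F" using cardI by simp
    obtain r' where r': "\<exists>i\<in>I'. r' i \<noteq> 0" "\<forall>f\<in>F. f (\<Sum>i\<in>I'. r' i *\<^sub>R v' i) = 0"
      using insert.IH[OF lF fI' cI', of v'] by (elim exE conjE)
    define r where "r i = (if i = i0 then - (\<Sum>j\<in>I'. r' j * (h (v j) / h (v i0))) else r' i)" for i
    have sumeq: "(\<Sum>i\<in>I. r i *\<^sub>R v i) = (\<Sum>i\<in>I'. r' i *\<^sub>R v' i)"
    proof -
      have "(\<Sum>i\<in>I. r i *\<^sub>R v i) = r i0 *\<^sub>R v i0 + (\<Sum>i\<in>I'. r i *\<^sub>R v i)"
        using i0(1) insert.prems(2) I'_def by (simp add: sum.remove)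
      also have "(\<Sum>i\<in>I'. r i *\<^sub>R v i) = (\<Sum>i\<in>I'. r' i *\<^sub>R v i)"
        unfolding r_def I'_def by (rule sum.cong) auto
      also have "(\<Sum>i\<in>I'. r' i *\<^sub>R v' i) = (\<Sum>i\<in>I'. r' i *\<^sub>R v i) - (\<Sum>j\<in>I'. r' j * (h (v j) / h (v i0))) *\<^sub>R v i0"
        unfolding v'_def by (simp add: scaleR_diff_right sum_subtractf scaleR_sum_left)
      ultimately show ?thesis unfolding r_def by simp
    qed
    have "h (\<Sum>i\<in>I'. r' i *\<^sub>R v' i) = (\<Sum>i\<in>I'. r' i * (h (v i) - h (v i) / h (v i0) * h (v i0)))"
      unfolding v'_def by (simp add: linear_sum[OF lh] linear_cmul[OF lh] linear_diff[OF lh])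
    also have "\<dots> = 0" using i0(2) by simp
    finally have "h (\<Sum>i\<in>I. r i *\<^sub>R v i) = 0" using sumeq by simp
    moreover have "\<exists>i\<in>I. r i \<noteq> 0" using r'(1) unfolding r_def I'_def by auto
    ultimately show ?thesis using r'(2) sumeq by (intro exI[of _ r] conjI) auto
  qed
qed

lemma approx_exact:
  fixes f :: "'i \<Rightarrow> 'a::real_vector \<Rightarrow> real"
  assumes "finite J" "\<forall>j\<in>J. linear (f j)" "subspace M"
    and "\<forall>e>0. \<exists>m\<in>M. \<forall>j\<in>J. \<bar>f j (a - m)\<bar> < e"
  shows "\<exists>m\<in>M. \<forall>j\<in>J. f j (a - m) = 0"
  using assms
proof (induction J arbitrary: f rule: finite_induct)
  case empty
  then show ?case using subspace_0[OF assms(3)] by auto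
next
  case (insert j0 J)
  define h where "h = f j0"
  have lh: "linear h" using insert.prems(1) h_def by auto
  have lJ: "\<forall>j\<in>J. linear (f j)" using insert.prems(1) by auto
  show ?case
  proof (cases "\<forall>m\<in>M. h m = 0")
    case True
    have hJ: "\<forall>e>0. \<exists>m\<in>M. \<forall>j\<in>J. \<bar>f j (a - m)\<bar> < e" using insert.prems(3) by auto
    obtain m where m: "m \<in> M" "\<forall>j\<in>J. f j (a - m) = 0"
      using insert.IH[OF lJ insert.prems(2) hJ] by (elim bexE)
    have ha: "h a = 0"
    proof (rule ccontr)
      assume "h a \<noteq> 0"
      then obtain m' where "m' \<in> M" "\<forall>j\<in>insert j0 J. \<bar>f j (a - m')\<bar> < \<bar>h a\<bar>"
        using insert.prems(3) by (meson zero_less_abs_iff)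
      then have "\<bar>h (a - m')\<bar> < \<bar>h a\<bar>" unfolding h_def by auto
      moreover have "h (a - m') = h a" using True \<open>m' \<in> M\<close> by (simp add: linear_diff[OF lh])
      ultimately show False by simp
    qed
    have "h (a - m) = 0" using ha True m(1) by (simp add: linear_diff[OF lh])
    then show ?thesis using m unfolding h_def by (intro bexI[of _ m]) auto
  next
    case False
    then obtain m0 where m0: "m0 \<in> M" "h m0 \<noteq> 0" by auto
    define m1 where "m1 = (1 / h m0) *\<^sub>R m0"
    have m1: "m1 \<in> M" "h m1 = 1" using m0 subspace_scale[OF assms(3)] unfolding m1_def
      by (auto simp: linear_cmul[OF lh])
    define f' where "f' j x = f j (x - h x *\<^sub>R m1)" for j x
    have lf': "\<forall>j\<in>J. linear (f' j)"
    proof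
      fix j assume "j \<in> J"
      have lj: "linear (f j)" using lJ \<open>j \<in> J\<close> by auto
      show "linear (f' j)"
      proof (rule linearI)
        fix x y :: 'a
        show "f' j (x + y) = f' j x + f' j y" unfolding f'_def
          by (simp add: linear_add[OF lh] linear_add[OF lj] linear_diff[OF lj] linear_cmul[OF lj] algebra_simps)
      next
        fix c :: real and x :: 'a
        show "f' j (c *\<^sub>R x) = c *\<^sub>R f' j x" unfolding f'_def
          by (simp add: linear_cmul[OF lh] linear_diff[OF lj] linear_cmul[OF lj] algebra_simps)
      qed
    qed
    define B where "B = (\<Sum>j\<in>J. \<bar>f j m1\<bar>)"
    have B: "\<bar>f j m1\<bar> \<le> B" if "j \<in> J" for j
      unfolding B_def using that insert.hyps(1) by (intro member_le_sum) auto
    have B0: "B \<ge> 0" unfolding B_def by (simp add: sum_nonneg)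
    have hyp': "\<forall>e>0. \<exists>m\<in>M. \<forall>j\<in>J. \<bar>f' j (a - m)\<bar> < e"
    proof (intro allI impI)
      fix e :: real assume "e > 0"
      then have "e / (1 + B) > 0" using B0 by simp
      then obtain m where m: "m \<in> M" "\<forall>j\<in>insert j0 J. \<bar>f j (a - m)\<bar> < e / (1 + B)"
        using insert.prems(3) by (elim allE impE bexE) auto
      have "\<bar>f' j (a - m)\<bar> < e" if "j \<in> J" for j
      proof -
        have "f' j (a - m) = f j (a - m) - h (a - m) * f j m1"
          unfolding f'_def using lJ that by (simp add: linear_diff linear_cmul)
        then have "\<bar>f' j (a - m)\<bar> \<le> \<bar>f j (a - m)\<bar> + \<bar>h (a - m)\<bar> * \<bar>f j m1\<bar>"
          by (simp add: abs_mult[symmetric] abs_triangle_ineq4)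
        also have "\<dots> \<le> \<bar>f j (a - m)\<bar> + \<bar>h (a - m)\<bar> * B"
          using B[OF that] by (simp add: mult_left_mono)
        also have "\<dots> < e / (1 + B) + e / (1 + B) * B"
        proof -
          have "\<bar>f j (a - m)\<bar> < e / (1 + B)" using m(2) that by auto
          moreover have "\<bar>h (a - m)\<bar> < e / (1 + B)" using m(2) unfolding h_def by auto
          then have "\<bar>h (a - m)\<bar> * B \<le> e / (1 + B) * B" using B0 by (intro mult_right_mono) auto
          ultimately show ?thesis by linarith
        qed
        also have "\<dots> = e / (1 + B) * (1 + B)" by (simp add: distrib_left)
        also have "\<dots> = e" using B0 by simp
        finally show ?thesis .
      qed
      then show "\<exists>m\<in>M. \<forall>j\<in>J. \<bar>f' j (a - m)\<bar> < e" using m(1) by auto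
    qed
    obtain m2 where m2: "m2 \<in> M" "\<forall>j\<in>J. f' j (a - m2) = 0"
      using insert.IH[OF lf' insert.prems(2) hyp'] by (elim bexE)
    define m where "m = m2 + h (a - m2) *\<^sub>R m1"
    have mM: "m \<in> M" unfolding m_def using m1(1) m2(1) assms(3)
      by (simp add: subspace_add subspace_scale)
    have am: "a - m = (a - m2) - h (a - m2) *\<^sub>R m1" unfolding m_def by (simp add: algebra_simps)
    have "\<forall>j\<in>J. f j (a - m) = 0" using m2(2) unfolding f'_def am by simp
    moreover have "h (a - m) = 0" unfolding am using m1(2)
      by (simp add: linear_diff[OF lh] linear_cmul[OF lh])
    ultimately show ?thesis using mM unfolding h_def by (intro bexI[of _ m]) auto
  qed
qed



definition FinSupp :: "'a::{real_vector,topological_space} set \<Rightarrow> bool" where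
  "FinSupp A \<longleftrightarrow> (\<forall>g. cont_lin_functional g \<longrightarrow> finite {a\<in>A. g a \<noteq> 0})"

lemma int_span_single: "a \<in> A \<Longrightarrow> of_int k *\<^sub>R a \<in> int_span A"
  unfolding int_span_def
  by (rule CollectI, intro exI[of _ "{a}"] exI[of _ "\<lambda>_. k"]) simp

lemma nbhd0_single:
  assumes "cont_lin_functional g" "e > 0"
  shows "nbhd0 {y. \<bar>g y\<bar> < e}"
proof -
  have "Nb {g} 0 e = {y. \<bar>g y\<bar> < e}" using Nb0[of "{g}" e] assms(1) by simp
  then show ?thesis using nbhd0_Nb[of "{g}" e] assms by simp
qed

lemma acs_imp_finsupp:
  assumes "abs_cauchy_summable A"
  shows "FinSupp A"
  unfolding FinSupp_def
proof (intro allI impI)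
  fix g :: "'a \<Rightarrow> real" assume g: "cont_lin_functional g"
  obtain F where F: "finite F" "F \<subseteq> A" "int_span (A - F) \<subseteq> {y. \<bar>g y\<bar> < 1}"
    using assms nbhd0_single[OF g, of 1] unfolding abs_cauchy_summable_def by auto
  have "{a\<in>A. g a \<noteq> 0} \<subseteq> F"
  proof
    fix a assume a: "a \<in> {a\<in>A. g a \<noteq> 0}"
    show "a \<in> F"
    proof (rule ccontr)
      assume "a \<notin> F"
      then have aA: "a \<in> A - F" using a by simp
      define k where "k = \<lceil>1 / \<bar>g a\<bar>\<rceil>"
      have "of_int k *\<^sub>R a \<in> int_span (A - F)" by (rule int_span_single[OF aA])
      then have "\<bar>g (of_int k *\<^sub>R a)\<bar> < 1" using F(3) by auto
      then have "\<bar>of_int k * g a\<bar> < 1" using linear_cmul[OF clf_linear[OF g]] by simp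
      moreover have "of_int k \<ge> 1 / \<bar>g a\<bar>" unfolding k_def by simp
      then have "of_int k * \<bar>g a\<bar> \<ge> 1" using a by (simp add: field_simps)
      moreover have "of_int k \<ge> (0::real)" using \<open>of_int k \<ge> 1 / \<bar>g a\<bar>\<close> by (smt (verit) divide_nonneg_nonneg abs_ge_zero)
      ultimately show False by (simp add: abs_mult)
    qed
  qed
  then show "finite {a\<in>A. g a \<noteq> 0}" using F(1) by (rule finite_subset)
qed

lemma finsupp_imp_acs:
  assumes weak: "weak_topology_tvs TYPE('a::{real_vector,topological_space})"
    and "FinSupp (A::'a set)"
  shows "abs_cauchy_summable A"
  unfolding abs_cauchy_summable_def
proof (intro allI impI)
  fix V0 :: "'a set" assume nV: "nbhd0 V0"
  obtain F e where F: "finite F" "\<forall>f\<in>F. cont_lin_functional f" "e > 0" "{y. \<forall>f\<in>F. \<bar>f y\<bar> < e} \<subseteq> V0"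
    using nbhd0_basis[OF weak nV] by (elim exE conjE)
  define G where "G = (\<Union>f\<in>F. {a\<in>A. f a \<noteq> 0})"
  have fG: "finite G" unfolding G_def using F(1,2) assms(2) unfolding FinSupp_def by auto
  have "int_span (A - G) \<subseteq> {y. \<forall>f\<in>F. \<bar>f y\<bar> < e}"
  proof
    fix y assume "y \<in> int_span (A - G)"
    then obtain H z where H: "finite H" "H \<subseteq> A - G" "y = (\<Sum>a\<in>H. of_int (z a) *\<^sub>R a)"
      unfolding int_span_def by auto
    have fy0: "f y = 0" if "f \<in> F" for f
    proof -
      have fc: "cont_lin_functional f" using F(2) that by auto
      have "f y = (\<Sum>a\<in>H. of_int (z a) * f a)" using H(3) clf_sum[OF fc] by simp
      also have "\<dots> = 0" using H(2) that unfolding G_def by (intro sum.neutral) auto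
      finally show ?thesis .
    qed
    have "\<bar>f y\<bar> < e" if "f \<in> F" for f using fy0[OF that] F(3) by simp
    then show "y \<in> {y. \<forall>f\<in>F. \<bar>f y\<bar> < e}" by blast
  qed
  then show "\<exists>F. finite F \<and> F \<subseteq> A \<and> int_span (A - F) \<subseteq> V0"
    using F(4) fG by (intro exI[of _ G] conjI) (auto simp: G_def)
qed

lemma min_char:
  assumes weak: "weak_topology_tvs TYPE('a::{real_vector,topological_space})"
    and "minimal_set (A::'a set)" "a \<in> A"
  shows "\<exists>F e. finite F \<and> (\<forall>f\<in>F. cont_lin_functional f) \<and> e > 0 \<and>
           (\<forall>m\<in>span (A - {a}). \<exists>g\<in>F. \<bar>g (a - m)\<bar> \<ge> e)"
proof -
  have na: "a \<in> - closure (span (A - {a}))" using assms(2,3) unfolding minimal_set_def by auto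
  have op: "open (- closure (span (A - {a})))" by auto
  obtain F e where F: "finite F" "\<forall>f\<in>F. cont_lin_functional f" "e > 0" "Nb F a e \<subseteq> - closure (span (A - {a}))"
    using weak_basis[OF weak op na] by (elim exE conjE)
  have "\<forall>m\<in>span (A - {a}). \<exists>g\<in>F. \<bar>g (a - m)\<bar> \<ge> e"
  proof
    fix m assume m: "m \<in> span (A - {a})"
    then have "m \<notin> Nb F a e" using F(4) closure_subset by blast
    then obtain g where g: "g \<in> F" "\<not> \<bar>g m - g a\<bar> < e" unfolding Nb_def by auto
    have gc: "cont_lin_functional g" using F(2) g(1) by auto
    have "g (a - m) = - (g m - g a)" using linear_diff[OF clf_linear[OF gc]] by simp
    then have "\<bar>g (a - m)\<bar> \<ge> e" using g(2) by simp
    then show "\<exists>g\<in>F. \<bar>g (a - m)\<bar> \<ge> e" using g(1) by blast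
  qed
  then show ?thesis using F(1-3) by (intro exI[of _ F] exI[of _ e] conjI)
qed


lemma finsupp_min_imp_lin:
  assumes weak: "weak_topology_tvs TYPE('a::{real_vector,topological_space})"
    and fs: "FinSupp (A::'a set)" and mn: "minimal_set A"
  shows "top_lin_indep A"
  unfolding top_lin_indep_def
proof (intro allI impI)
  fix W :: "'a set" assume nW: "nbhd0 W"
  obtain F \<epsilon> where F: "finite F" "\<forall>f\<in>F. cont_lin_functional f" "\<epsilon> > 0" "{y. \<forall>f\<in>F. \<bar>f y\<bar> < \<epsilon>} \<subseteq> W"
    using nbhd0_basis[OF weak nW] by (elim exE conjE)
  define G where "G = (\<Union>f\<in>F. {a\<in>A. f a \<noteq> 0})"
  have fG: "finite G" unfolding G_def using F(1,2) fs unfolding FinSupp_def by auto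
  have GA: "G \<subseteq> A" unfolding G_def by auto
  have "\<forall>a\<in>G. \<exists>pr. finite (fst pr) \<and> (\<forall>f\<in>fst pr. cont_lin_functional f) \<and> snd pr > 0 \<and>
           (\<forall>m\<in>span (A - {a}). \<exists>g\<in>fst pr. \<bar>g (a - m)\<bar> \<ge> snd pr)"
  proof
    fix a assume "a \<in> G"
    then have "a \<in> A" using GA by auto
    obtain Fa ea where "finite Fa" "\<forall>f\<in>Fa. cont_lin_functional f" "ea > 0"
        "\<forall>m\<in>span (A - {a}). \<exists>g\<in>Fa. \<bar>g (a - m)\<bar> \<ge> ea"
      using min_char[OF weak mn \<open>a \<in> A\<close>] by (elim exE conjE)
    then show "\<exists>pr. finite (fst pr) \<and> (\<forall>f\<in>fst pr. cont_lin_functional f) \<and> snd pr > 0 \<and>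
           (\<forall>m\<in>span (A - {a}). \<exists>g\<in>fst pr. \<bar>g (a - m)\<bar> \<ge> snd pr)"
      by (intro exI[of _ "(Fa, ea)"]) simp
  qed
  from bchoice[OF this] obtain p where p: "\<forall>a\<in>G. finite (fst (p a)) \<and> (\<forall>f\<in>fst (p a). cont_lin_functional f) \<and> snd (p a) > 0 \<and>
           (\<forall>m\<in>span (A - {a}). \<exists>g\<in>fst (p a). \<bar>g (a - m)\<bar> \<ge> snd (p a))"
    by (elim exE)
  define C where "C = (\<Sum>a\<in>G. \<Sum>f\<in>F. \<bar>f a\<bar>)"
  have C0: "C \<ge> 0" unfolding C_def by (simp add: sum_nonneg)
  have Cb: "\<bar>f a\<bar> \<le> C" if "f \<in> F" "a \<in> G" for f a
  proof -
    have "\<bar>f a\<bar> \<le> (\<Sum>f\<in>F. \<bar>f a\<bar>)" using that F(1) by (intro member_le_sum) auto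
    also have "\<dots> \<le> C" unfolding C_def using that fG
      by (intro member_le_sum[of a G "\<lambda>a. \<Sum>f\<in>F. \<bar>f a\<bar>"]) (auto simp: sum_nonneg)
    finally show ?thesis .
  qed
  define \<eta> where "\<eta> = \<epsilon> / (1 + C)"
  have \<eta>0: "\<eta> > 0" unfolding \<eta>_def using F(3) C0 by simp
  have \<eta>C: "\<eta> * C < \<epsilon>"
  proof -
    have "\<eta> * C = \<epsilon> * (C / (1 + C))" unfolding \<eta>_def by simp
    also have "\<dots> < \<epsilon> * 1" using F(3) C0 by (intro mult_strict_left_mono) auto
    finally show ?thesis by simp
  qed
  define mu where "mu = Min (insert 1 ((\<lambda>a. snd (p a)) ` G))"
  have mu0: "mu > 0" unfolding mu_def using fG p by (subst Min_gr_iff) auto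
  have mua: "mu \<le> snd (p a)" if "a \<in> G" for a unfolding mu_def using fG that by (intro Min_le) auto
  define \<delta> where "\<delta> = \<eta> * mu"
  have \<delta>0: "\<delta> > 0" unfolding \<delta>_def using \<eta>0 mu0 by simp
  define F' where "F' = (\<Union>a\<in>G. fst (p a))"
  have fF': "finite F'" unfolding F'_def using fG p by auto
  have cF': "\<forall>f\<in>F'. cont_lin_functional f" unfolding F'_def using p by auto
  define U where "U = {y. \<forall>f\<in>F'. \<bar>f y\<bar> < \<delta>}"
  have nU: "nbhd0 U" unfolding U_def using nbhd0_Nb[OF fF' cF' \<delta>0] Nb0[OF cF'] by simp
  have main: "\<forall>a\<in>H. r a *\<^sub>R a \<in> W"
    if H: "finite H" "H \<subseteq> A" "(\<Sum>a\<in>H. r a *\<^sub>R a) \<in> U" for H and r :: "'a \<Rightarrow> real"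
  proof
    fix a assume aH: "a \<in> H"
    define x where "x = (\<Sum>a\<in>H. r a *\<^sub>R a)"
    have "\<bar>f (r a *\<^sub>R a)\<bar> < \<epsilon>" if fF: "f \<in> F" for f
    proof (cases "a \<in> G")
      case False
      then have "f a = 0" using aH H(2) fF unfolding G_def by auto
      then show ?thesis using F(3) linear_cmul[OF clf_linear, of f] F(2) fF by simp
    next
      case True
      have ra: "\<bar>r a\<bar> \<le> \<eta>"
      proof (rule ccontr)
        assume "\<not> \<bar>r a\<bar> \<le> \<eta>"
        then have gt: "\<bar>r a\<bar> > \<eta>" by simp
        then have ra0: "r a \<noteq> 0" using \<eta>0 by auto
        define m where "m = - (1 / r a) *\<^sub>R (\<Sum>b\<in>H - {a}. r b *\<^sub>R b)"
        have "m \<in> span (A - {a})" unfolding m_def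
          using H(2) by (intro span_scale span_sum span_base) auto
        then obtain g where g: "g \<in> fst (p a)" "\<bar>g (a - m)\<bar> \<ge> snd (p a)"
          using p True by blast
        have gc: "cont_lin_functional g" using p True g(1) by auto
        have gF': "g \<in> F'" unfolding F'_def using True g(1) by auto
        have xs: "x = r a *\<^sub>R a + (\<Sum>b\<in>H - {a}. r b *\<^sub>R b)"
          unfolding x_def using aH H(1) by (simp add: sum.remove)
        have am: "a - m = (1 / r a) *\<^sub>R x"
          unfolding m_def xs using ra0 by (simp add: scaleR_add_right algebra_simps)
        have "g (a - m) = g x / r a" unfolding am using linear_cmul[OF clf_linear[OF gc]] by simp
        then have "\<bar>g (a - m)\<bar> = \<bar>g x\<bar> / \<bar>r a\<bar>" by (simp add: abs_divide)
        also have "\<dots> \<le> \<bar>g x\<bar> / \<eta>" using gt \<eta>0 by (intro divide_left_mono) auto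
        also have "\<dots> < \<delta> / \<eta>"
          using H(3) gF' \<eta>0 unfolding U_def x_def by (intro divide_strict_right_mono) auto
        also have "\<delta> / \<eta> = mu" unfolding \<delta>_def using \<eta>0 by simp
        also have "mu \<le> snd (p a)" by (rule mua[OF True])
        finally show False using g(2) by simp
      qed
      have fc: "cont_lin_functional f" using F(2) fF by auto
      have "\<bar>f (r a *\<^sub>R a)\<bar> = \<bar>r a\<bar> * \<bar>f a\<bar>" using linear_cmul[OF clf_linear[OF fc]] by (simp add: abs_mult)
      also have "\<dots> \<le> \<eta> * C" using ra Cb[OF fF True] \<eta>0 by (intro mult_mono) auto
      also have "\<dots> < \<epsilon>" by (rule \<eta>C)
      finally show ?thesis .
    qed
    then show "r a *\<^sub>R a \<in> W" using F(4) by blast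
  qed
  show "\<exists>U. nbhd0 U \<and> (\<forall>F r. finite F \<and> F \<subseteq> A \<and> (\<Sum>a\<in>F. r a *\<^sub>R a) \<in> U \<longrightarrow> (\<forall>a\<in>F. r a *\<^sub>R a \<in> W))"
    using nU main by (intro exI[of _ U] conjI allI impI) auto
qed

lemma lin_imp_indep:
  fixes A :: "'a::{real_vector,topological_space} set"
  shows "top_lin_indep A \<Longrightarrow> top_indep A"
  unfolding top_lin_indep_def top_indep_def
proof (intro allI impI)
  fix W :: "'a set" assume H: "\<forall>W. nbhd0 W \<longrightarrow> (\<exists>U. nbhd0 U \<and> (\<forall>F r. finite F \<and> F \<subseteq> A \<and> (\<Sum>a\<in>F. r a *\<^sub>R a) \<in> U \<longrightarrow> (\<forall>a\<in>F. r a *\<^sub>R a \<in> W)))"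
    and "nbhd0 W"
  then obtain U where U: "nbhd0 U" "\<forall>F r. finite F \<and> F \<subseteq> A \<and> (\<Sum>a\<in>F. r a *\<^sub>R a) \<in> U \<longrightarrow> (\<forall>a\<in>F. r a *\<^sub>R a \<in> W)"
    by blast
  have "\<forall>F z. finite F \<and> F \<subseteq> A \<and> (\<Sum>a\<in>F. of_int (z a) *\<^sub>R a) \<in> U \<longrightarrow> (\<forall>a\<in>F. of_int (z a) *\<^sub>R a \<in> W)"
  proof (intro allI impI)
    fix F and z :: "'a \<Rightarrow> int" assume "finite F \<and> F \<subseteq> A \<and> (\<Sum>a\<in>F. of_int (z a) *\<^sub>R a) \<in> U"
    then show "\<forall>a\<in>F. of_int (z a) *\<^sub>R a \<in> W" using U(2)[rule_format, of F "\<lambda>a. of_int (z a)"] by simp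
  qed
  then show "\<exists>U. nbhd0 U \<and> (\<forall>F z. finite F \<and> F \<subseteq> A \<and> (\<Sum>a\<in>F. of_int (z a) *\<^sub>R a) \<in> U \<longrightarrow> (\<forall>a\<in>F. of_int (z a) *\<^sub>R a \<in> W))"
    using U(1) by blast
qed



lemma top_indep_get:
  fixes A :: "'a::{real_vector,topological_space} set"
  assumes "top_indep A" "nbhd0 W"
  obtains U where "nbhd0 U" "\<And>F z a. finite F \<Longrightarrow> F \<subseteq> A \<Longrightarrow> (\<Sum>a\<in>F. of_int (z a) *\<^sub>R a) \<in> U \<Longrightarrow> a \<in> F \<Longrightarrow> of_int (z a) *\<^sub>R a \<in> W"
proof -
  have H: "\<forall>W. nbhd0 W \<longrightarrow> (\<exists>U. nbhd0 U \<and>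
        (\<forall>F (z::'a \<Rightarrow> int). finite F \<and> F \<subseteq> A \<and> (\<Sum>a\<in>F. of_int (z a) *\<^sub>R a) \<in> U
            \<longrightarrow> (\<forall>a\<in>F. of_int (z a) *\<^sub>R a \<in> W)))" using assms(1) unfolding top_indep_def .
  obtain U where U1: "nbhd0 U" and U2: "\<forall>F (z::'a \<Rightarrow> int). finite F \<and> F \<subseteq> A \<and> (\<Sum>a\<in>F. of_int (z a) *\<^sub>R a) \<in> U
            \<longrightarrow> (\<forall>a\<in>F. of_int (z a) *\<^sub>R a \<in> W)"
    using H[rule_format, OF assms(2)] by (elim exE conjE)
  show thesis
  proof (rule that[OF U1])
    fix F and z :: "'a \<Rightarrow> int" and a
    assume "finite F" "F \<subseteq> A" "(\<Sum>a\<in>F. of_int (z a) *\<^sub>R a) \<in> U" "a \<in> F"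
    then show "of_int (z a) *\<^sub>R a \<in> W" using U2[rule_format, of F z] by simp
  qed
qed

lemma sum_bound_lin:
  assumes "cont_lin_functional f" "finite I" "\<forall>a\<in>I. \<bar>c a\<bar> \<le> \<eta>"
  shows "\<bar>f (\<Sum>a\<in>I. c a *\<^sub>R a)\<bar> \<le> \<eta> * (\<Sum>a\<in>I. \<bar>f a\<bar>)"
proof -
  have "\<bar>f (\<Sum>a\<in>I. c a *\<^sub>R a)\<bar> = \<bar>\<Sum>a\<in>I. c a * f a\<bar>" using clf_sum[OF assms(1)] by simp
  also have "\<dots> \<le> (\<Sum>a\<in>I. \<bar>c a * f a\<bar>)" by (rule sum_abs)
  also have "\<dots> \<le> (\<Sum>a\<in>I. \<eta> * \<bar>f a\<bar>)"
    using assms(3) by (intro sum_mono) (simp add: abs_mult mult_right_mono)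
  also have "\<dots> = \<eta> * (\<Sum>a\<in>I. \<bar>f a\<bar>)" by (simp add: sum_distrib_left)
  finally show ?thesis .
qed

lemma indep_imp_finsupp:
  assumes weak: "weak_topology_tvs TYPE('a::{real_vector,topological_space})"
    and ti: "top_indep (A::'a set)"
  shows "FinSupp A"
  unfolding FinSupp_def
proof (intro allI impI, rule ccontr)
  fix g :: "'a \<Rightarrow> real" assume gc: "cont_lin_functional g" and inf: "infinite {a\<in>A. g a \<noteq> 0}"
  obtain U where nU: "nbhd0 U" and Up: "\<And>F z a. finite F \<Longrightarrow> F \<subseteq> A \<Longrightarrow> (\<Sum>a\<in>F. of_int (z a) *\<^sub>R a) \<in> U \<Longrightarrow> a \<in> F \<Longrightarrow> of_int (z a) *\<^sub>R a \<in> {y. \<bar>g y\<bar> < 1}"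
    by (rule top_indep_get[OF ti nbhd0_single[OF gc zero_less_one]]) blast
  obtain F' \<delta> where F': "finite F'" "\<forall>f\<in>F'. cont_lin_functional f" "\<delta> > 0" "{y. \<forall>f\<in>F'. \<bar>f y\<bar> < \<delta>} \<subseteq> U"
    using nbhd0_basis[OF weak nU] by (elim exE conjE)
  obtain I where I: "finite I" "card I = card F' + 1" "I \<subseteq> {a\<in>A. g a \<noteq> 0}"
    using infinite_arbitrarily_large[OF inf, of "card F' + 1"] by (elim exE conjE)
  have lF': "\<forall>f\<in>F'. linear f" using F'(2) clf_linear by auto
  obtain r where r: "\<exists>i\<in>I. r i \<noteq> 0" "\<forall>f\<in>F'. f (\<Sum>i\<in>I. r i *\<^sub>R id i) = 0"
    using lin_dep_kernel[OF F'(1) lF' I(1), of id] I(2) by auto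
  obtain a0 where a0: "a0 \<in> I" "r a0 \<noteq> 0" using r(1) by auto
  have ga0: "g a0 \<noteq> 0" "a0 \<in> A" using a0(1) I(3) by auto
  define t where "t = (1 / \<bar>g a0\<bar> + 1) / \<bar>r a0\<bar>"
  define C where "C = (\<Sum>f\<in>F'. \<Sum>a\<in>I. \<bar>f a\<bar>)"
  have C0: "C \<ge> 0" unfolding C_def by (simp add: sum_nonneg)
  define \<eta> where "\<eta> = min (1/2) (\<delta> / (1 + C))"
  have \<eta>0: "\<eta> > 0" unfolding \<eta>_def using F'(3) C0 by simp
  obtain q :: nat and z :: "'a \<Rightarrow> int" where q: "q \<ge> 1" "\<forall>i\<in>I. \<bar>real q * (t * r i) - real_of_int (z i)\<bar> < \<eta>"
    using dirichlet[OF I(1) \<eta>0, of "\<lambda>i. t * r i"] by (elim exE conjE)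
  define y where "y = (\<Sum>a\<in>I. of_int (z a) *\<^sub>R a)"
  have "\<bar>f y\<bar> < \<delta>" if fF: "f \<in> F'" for f
  proof -
    have fc: "cont_lin_functional f" using F'(2) fF by auto
    have z0: "f (\<Sum>a\<in>I. (real q * t * r a) *\<^sub>R a) = 0"
    proof -
      have "f (\<Sum>a\<in>I. (real q * t * r a) *\<^sub>R a) = f ((real q * t) *\<^sub>R (\<Sum>a\<in>I. r a *\<^sub>R a))"
        by (simp add: scaleR_sum_right)
      also have "\<dots> = (real q * t) * f (\<Sum>a\<in>I. r a *\<^sub>R a)" using linear_cmul[OF clf_linear[OF fc]] by simp
      also have "\<dots> = 0" using r(2) fF by simp
      finally show ?thesis .
    qed
    have "y = (\<Sum>a\<in>I. (real_of_int (z a) - real q * t * r a) *\<^sub>R a) + (\<Sum>a\<in>I. (real q * t * r a) *\<^sub>R a)"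
      unfolding y_def by (simp add: sum.distrib[symmetric] scaleR_left_distrib[symmetric])
    then have "f y = f (\<Sum>a\<in>I. (real_of_int (z a) - real q * t * r a) *\<^sub>R a)"
      using z0 linear_add[OF clf_linear[OF fc]] by simp
    also have "\<bar>\<dots>\<bar> \<le> \<eta> * (\<Sum>a\<in>I. \<bar>f a\<bar>)"
      using q(2) by (intro sum_bound_lin[OF fc I(1)]) (auto simp: abs_minus_commute mult.assoc)
    finally have 1: "\<bar>f y\<bar> \<le> \<eta> * (\<Sum>a\<in>I. \<bar>f a\<bar>)" .
    have 2: "(\<Sum>a\<in>I. \<bar>f a\<bar>) \<le> C" unfolding C_def using fF F'(1)
      by (intro member_le_sum[of f F' "\<lambda>f. \<Sum>a\<in>I. \<bar>f a\<bar>"]) (auto simp: sum_nonneg)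
    have "\<eta> * (\<Sum>a\<in>I. \<bar>f a\<bar>) \<le> \<delta> / (1 + C) * C"
      using 2 \<eta>0 by (intro mult_mono) (auto simp: \<eta>_def sum_nonneg)
    also have "\<dots> < \<delta>"
    proof -
      have "\<delta> / (1 + C) * C = \<delta> * (C / (1 + C))" by simp
      also have "\<dots> < \<delta> * 1" using F'(3) C0 by (intro mult_strict_left_mono) auto
      finally show ?thesis by simp
    qed
    finally show ?thesis using 1 by simp
  qed
  then have "y \<in> U" using F'(4) by blast
  then have "of_int (z a0) *\<^sub>R a0 \<in> {y. \<bar>g y\<bar> < 1}"
    using Up[OF I(1)] I(3) a0(1) unfolding y_def by blast
  then have lt: "\<bar>of_int (z a0)\<bar> * \<bar>g a0\<bar> < 1" using linear_cmul[OF clf_linear[OF gc]] by (simp add: abs_mult)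
  have T1: "\<bar>real q * (t * r a0)\<bar> \<ge> t * \<bar>r a0\<bar>"
  proof -
    have "t \<ge> 0" unfolding t_def by simp
    then have "\<bar>real q * (t * r a0)\<bar> = real q * (t * \<bar>r a0\<bar>)" by (simp add: abs_mult)
    also have "\<dots> \<ge> 1 * (t * \<bar>r a0\<bar>)" using q(1) \<open>t \<ge> 0\<close> by (intro mult_right_mono) auto
    finally show ?thesis by simp
  qed
  have T2: "t * \<bar>r a0\<bar> = 1 / \<bar>g a0\<bar> + 1" unfolding t_def using a0(2) by simp
  have T3: "\<eta> \<le> 1/2" unfolding \<eta>_def by (rule min.cobounded1)
  have T4: "\<bar>real q * (t * r a0) - of_int (z a0)\<bar> < \<eta>" using q(2) a0(1) by auto
  have T5: "\<bar>real q * (t * r a0)\<bar> - \<bar>of_int (z a0)\<bar> \<le> \<bar>real q * (t * r a0) - of_int (z a0)\<bar>"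
    by (rule abs_triangle_ineq2)
  have "\<bar>of_int (z a0)\<bar> \<ge> 1 / \<bar>g a0\<bar> + 1/2" using T1 T2 T3 T4 T5 by linarith
  then have K: "\<bar>of_int (z a0)\<bar> * \<bar>g a0\<bar> \<ge> (1 / \<bar>g a0\<bar> + 1/2) * \<bar>g a0\<bar>"
    by (intro mult_right_mono) auto
  have E: "(1 / \<bar>g a0\<bar> + 1/2) * \<bar>g a0\<bar> = 1 + \<bar>g a0\<bar> / 2" using ga0(1) by (simp add: distrib_right)
  show False using K E lt abs_ge_zero[of "g a0"] by linarith
qed


lemma indep_imp_minimal:
  assumes weak: "weak_topology_tvs TYPE('a::{real_vector,t2_space})"
    and A0: "(A::'a set) \<subseteq> UNIV - {0}" and ti: "top_indep A"
  shows "minimal_set A"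
  unfolding minimal_set_def
proof (intro ballI notI)
  fix a assume aA: "a \<in> A" and ac: "a \<in> closure (span (A - {a}))"
  have a0: "a \<noteq> 0" using aA A0 by auto
  obtain f where fc: "cont_lin_functional f" and fa: "f a \<noteq> 0" using sep_functional[OF weak a0] by auto
  have fa0: "\<bar>f a\<bar> > 0" using fa by simp
  obtain U where nU: "nbhd0 U" and Up: "\<And>F z b. finite F \<Longrightarrow> F \<subseteq> A \<Longrightarrow> (\<Sum>a\<in>F. of_int (z a) *\<^sub>R a) \<in> U \<Longrightarrow> b \<in> F \<Longrightarrow> of_int (z b) *\<^sub>R b \<in> {y. \<bar>f y\<bar> < \<bar>f a\<bar>}"
    by (rule top_indep_get[OF ti nbhd0_single[OF fc fa0]]) blast
  obtain F' \<delta> where F': "finite F'" "\<forall>f\<in>F'. cont_lin_functional f" "\<delta> > 0" "{y. \<forall>f\<in>F'. \<bar>f y\<bar> < \<delta>} \<subseteq> U"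
    using nbhd0_basis[OF weak nU] by (elim exE conjE)
  define M where "M = span (A - {a})"
  have hyp: "\<forall>e>0. \<exists>m\<in>M. \<forall>g\<in>F'. \<bar>g (a - m)\<bar> < e"
  proof (intro allI impI)
    fix e :: real assume "e > 0"
    have op: "open (Nb F' a e)" by (rule open_Nb[OF F'(1,2)])
    have aN: "a \<in> Nb F' a e" unfolding Nb_def using \<open>e > 0\<close> by simp
    have "M \<inter> Nb F' a e \<noteq> {}"
      using ac op aN unfolding M_def closure_iff_nhds_not_empty by blast
    then obtain m where m: "m \<in> M" "m \<in> Nb F' a e" by blast
    have "\<bar>g (a - m)\<bar> < e" if "g \<in> F'" for g
    proof -
      have gc: "cont_lin_functional g" using F'(2) that by auto
      have "\<bar>g m - g a\<bar> < e" using m(2) that unfolding Nb_def by auto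
      then show ?thesis using linear_diff[OF clf_linear[OF gc]] by (simp add: abs_minus_commute)
    qed
    then show "\<exists>m\<in>M. \<forall>g\<in>F'. \<bar>g (a - m)\<bar> < e" using m(1) by blast
  qed
  have lF': "\<forall>g\<in>F'. linear ((\<lambda>g. g) g)" using F'(2) clf_linear by auto
  obtain m where m: "m \<in> M" "\<forall>g\<in>F'. g (a - m) = 0"
    using approx_exact[of F' "\<lambda>g. g" M a] F'(1) lF' hyp unfolding M_def by auto
  obtain B c where B: "finite B" "B \<subseteq> A - {a}" "m = (\<Sum>b\<in>B. c b *\<^sub>R b)"
    using m(1) unfolding M_def span_explicit by auto
  define C where "C = (\<Sum>g\<in>F'. \<Sum>b\<in>B. \<bar>g b\<bar>)"
  have C0: "C \<ge> 0" unfolding C_def by (simp add: sum_nonneg)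
  define \<eta> where "\<eta> = \<delta> / (1 + C)"
  have \<eta>0: "\<eta> > 0" unfolding \<eta>_def using F'(3) C0 by simp
  obtain q :: nat and z :: "'a \<Rightarrow> int" where q: "q \<ge> 1" "\<forall>i\<in>B. \<bar>real q * c i - real_of_int (z i)\<bar> < \<eta>"
    using dirichlet[OF B(1) \<eta>0, of c] by (elim exE conjE)
  define w where "w b = (if b = a then int q else - z b)" for b
  define H where "H = insert a B"
  have aB: "a \<notin> B" using B(2) by auto
  have fH: "finite H" "H \<subseteq> A" using B(1,2) aA unfolding H_def by auto
  define y where "y = (\<Sum>b\<in>H. of_int (w b) *\<^sub>R b)"
  have y1: "y = real q *\<^sub>R a - (\<Sum>b\<in>B. of_int (z b) *\<^sub>R b)"
  proof -
    have "y = of_int (w a) *\<^sub>R a + (\<Sum>b\<in>B. of_int (w b) *\<^sub>R b)"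
      unfolding y_def H_def using B(1) aB by simp
    also have "(\<Sum>b\<in>B. of_int (w b) *\<^sub>R b) = - (\<Sum>b\<in>B. of_int (z b) *\<^sub>R b)"
      unfolding w_def using aB by (simp add: sum_negf[symmetric]) (rule sum.cong, auto)
    finally show ?thesis unfolding w_def by simp
  qed
  have y2: "y = real q *\<^sub>R (a - m) + (\<Sum>b\<in>B. (real q * c b - of_int (z b)) *\<^sub>R b)"
    unfolding y1 B(3)
    by (simp add: scaleR_diff_right scaleR_sum_right scaleR_left_diff_distrib sum_subtractf)
  have "\<bar>g y\<bar> < \<delta>" if gF: "g \<in> F'" for g
  proof -
    have gc: "cont_lin_functional g" using F'(2) gF by auto
    have "g y = g (\<Sum>b\<in>B. (real q * c b - of_int (z b)) *\<^sub>R b)"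
      unfolding y2 using m(2) gF linear_add[OF clf_linear[OF gc]] linear_cmul[OF clf_linear[OF gc]] by simp
    also have "\<bar>\<dots>\<bar> \<le> \<eta> * (\<Sum>b\<in>B. \<bar>g b\<bar>)"
      using q(2) by (intro sum_bound_lin[OF gc B(1)]) (auto simp: abs_minus_commute)
    finally have 1: "\<bar>g y\<bar> \<le> \<eta> * (\<Sum>b\<in>B. \<bar>g b\<bar>)" .
    have 2: "(\<Sum>b\<in>B. \<bar>g b\<bar>) \<le> C" unfolding C_def using gF F'(1)
      by (intro member_le_sum[of g F' "\<lambda>g. \<Sum>b\<in>B. \<bar>g b\<bar>"]) (auto simp: sum_nonneg)
    have "\<eta> * (\<Sum>b\<in>B. \<bar>g b\<bar>) \<le> \<eta> * C" using 2 \<eta>0 by (intro mult_left_mono) auto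
    also have "\<eta> * C < \<delta>"
    proof -
      have "\<eta> * C = \<delta> * (C / (1 + C))" unfolding \<eta>_def by simp
      also have "\<dots> < \<delta> * 1" using F'(3) C0 by (intro mult_strict_left_mono) auto
      finally show ?thesis by simp
    qed
    finally show ?thesis using 1 by simp
  qed
  then have "y \<in> U" using F'(4) by blast
  then have "of_int (w a) *\<^sub>R a \<in> {y. \<bar>f y\<bar> < \<bar>f a\<bar>}"
    using Up[OF fH, of w a] unfolding y_def H_def by simp
  then have "real q * \<bar>f a\<bar> < \<bar>f a\<bar>" using linear_cmul[OF clf_linear[OF fc]] unfolding w_def
    by (simp add: abs_mult)
  moreover have "real q * \<bar>f a\<bar> \<ge> 1 * \<bar>f a\<bar>" using q(1) by (intro mult_right_mono) auto
  ultimately show False by simp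
qed



lemma fin_supp_finite: "r \<in> fin_supp A \<Longrightarrow> finite {a. r a \<noteq> 0}"
  unfolding fin_supp_def by auto

lemma fin_supp_sub: "r \<in> fin_supp A \<Longrightarrow> {a. r a \<noteq> 0} \<subseteq> A"
  unfolding fin_supp_def by auto

lemma R_sum_map_eq:
  assumes "finite G" "{a. r a \<noteq> 0} \<subseteq> G"
  shows "R_sum_map r = (\<Sum>a\<in>G. r a *\<^sub>R a)"
  unfolding R_sum_map_def using assms by (intro sum.mono_neutral_left) auto

lemma Z_sum_map_eq:
  assumes "finite G" "{a. z a \<noteq> 0} \<subseteq> G"
  shows "Z_sum_map z = (\<Sum>a\<in>G. of_int (z a) *\<^sub>R a)"
  unfolding Z_sum_map_def using assms by (intro sum.mono_neutral_left) auto

lemma R_sum_map_add: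
  assumes "r \<in> fin_supp A" "s \<in> fin_supp A"
  shows "R_sum_map (\<lambda>a. r a + s a) = R_sum_map r + R_sum_map s"
proof -
  define G where "G = {a. r a \<noteq> 0} \<union> {a. s a \<noteq> 0}"
  have fG: "finite G" unfolding G_def using assms fin_supp_finite by auto
  have "R_sum_map (\<lambda>a. r a + s a) = (\<Sum>a\<in>G. (r a + s a) *\<^sub>R a)"
    by (rule R_sum_map_eq[OF fG]) (auto simp: G_def)
  also have "\<dots> = (\<Sum>a\<in>G. r a *\<^sub>R a) + (\<Sum>a\<in>G. s a *\<^sub>R a)"
    by (simp add: scaleR_add_left sum.distrib)
  also have "\<dots> = R_sum_map r + R_sum_map s"
    using R_sum_map_eq[OF fG, of r] R_sum_map_eq[OF fG, of s] by (auto simp: G_def)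
  finally show ?thesis .
qed

lemma R_sum_map_scale:
  assumes "r \<in> fin_supp A"
  shows "R_sum_map (\<lambda>a. c * r a) = c *\<^sub>R R_sum_map r"
proof -
  define G where "G = {a. r a \<noteq> 0}"
  have fG: "finite G" unfolding G_def using assms fin_supp_finite by auto
  have "R_sum_map (\<lambda>a. c * r a) = (\<Sum>a\<in>G. (c * r a) *\<^sub>R a)"
    by (rule R_sum_map_eq[OF fG]) (auto simp: G_def)
  also have "\<dots> = c *\<^sub>R (\<Sum>a\<in>G. r a *\<^sub>R a)" by (simp add: scaleR_sum_right)
  also have "\<dots> = c *\<^sub>R R_sum_map r" using R_sum_map_eq[OF fG, of r] by (simp add: G_def)
  finally show ?thesis .
qed

lemma Z_sum_map_add:
  assumes "r \<in> fin_supp A" "s \<in> fin_supp A"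
  shows "Z_sum_map (\<lambda>a. r a + s a) = Z_sum_map r + Z_sum_map s"
proof -
  define G where "G = {a. r a \<noteq> 0} \<union> {a. s a \<noteq> 0}"
  have fG: "finite G" unfolding G_def using assms fin_supp_finite by auto
  have "Z_sum_map (\<lambda>a. r a + s a) = (\<Sum>a\<in>G. of_int (r a + s a) *\<^sub>R a)"
    by (rule Z_sum_map_eq[OF fG]) (auto simp: G_def)
  also have "\<dots> = (\<Sum>a\<in>G. of_int (r a) *\<^sub>R a) + (\<Sum>a\<in>G. of_int (s a) *\<^sub>R a)"
    by (simp add: scaleR_add_left sum.distrib)
  also have "\<dots> = Z_sum_map r + Z_sum_map s"
    using Z_sum_map_eq[OF fG, of r] Z_sum_map_eq[OF fG, of s] by (auto simp: G_def)
  finally show ?thesis .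
qed

lemma Z_sum_map_neg:
  assumes "r \<in> fin_supp A"
  shows "Z_sum_map (\<lambda>a. - r a) = - Z_sum_map r"
proof -
  define G where "G = {a. r a \<noteq> 0}"
  have fG: "finite G" unfolding G_def using assms fin_supp_finite by auto
  have "Z_sum_map (\<lambda>a. - r a) = (\<Sum>a\<in>G. of_int (- r a) *\<^sub>R a)"
    by (rule Z_sum_map_eq[OF fG]) (auto simp: G_def)
  also have "\<dots> = - (\<Sum>a\<in>G. of_int (r a) *\<^sub>R a)" by (simp add: sum_negf)
  also have "\<dots> = - Z_sum_map r" using Z_sum_map_eq[OF fG, of r] by (simp add: G_def)
  finally show ?thesis .
qed

lemma fin_supp_add:
  fixes r s :: "'a \<Rightarrow> 'b::monoid_add"
  shows "r \<in> fin_supp A \<Longrightarrow> s \<in> fin_supp A \<Longrightarrow> (\<lambda>a. r a + s a) \<in> fin_supp A"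
proof -
  assume r: "r \<in> fin_supp A" and s: "s \<in> fin_supp A"
  have "{a. r a + s a \<noteq> 0} \<subseteq> {a. r a \<noteq> 0} \<union> {a. s a \<noteq> 0}" by auto
  moreover have "finite ({a. r a \<noteq> 0} \<union> {a. s a \<noteq> 0})" using fin_supp_finite[OF r] fin_supp_finite[OF s] by simp
  ultimately have "finite {a. r a + s a \<noteq> 0}" by (rule finite_subset)
  then show ?thesis using r s unfolding fin_supp_def by auto
qed

lemma fin_supp_scale:
  fixes r :: "'a \<Rightarrow> real"
  shows "r \<in> fin_supp A \<Longrightarrow> (\<lambda>a. c * r a) \<in> fin_supp A"
proof -
  assume r: "r \<in> fin_supp A"
  have "{a. c * r a \<noteq> 0} \<subseteq> {a. r a \<noteq> 0}" by auto
  then have "finite {a. c * r a \<noteq> (0::real)}" using fin_supp_finite[OF r] by (rule finite_subset)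
  then show ?thesis using r unfolding fin_supp_def by auto
qed

lemma fin_supp_neg:
  fixes r :: "'a \<Rightarrow> 'b::group_add"
  shows "r \<in> fin_supp A \<Longrightarrow> (\<lambda>a. - r a) \<in> fin_supp A"
  unfolding fin_supp_def by auto

lemma fin_supp_restrict: "finite H \<Longrightarrow> H \<subseteq> A \<Longrightarrow> (\<lambda>a. if a \<in> H then r a else 0) \<in> fin_supp A"
proof -
  assume "finite H" "H \<subseteq> A"
  moreover have "{a. (if a \<in> H then r a else 0) \<noteq> 0} \<subseteq> H" by auto
  ultimately show ?thesis unfolding fin_supp_def by (auto intro: finite_subset)
qed

lemma topspace_R_fin_top: "topspace (R_fin_top A) = fin_supp A"
  unfolding R_fin_top_def fin_supp_def by (auto simp: PiE_iff)

lemma topspace_Z_fin_top: "topspace (Z_fin_top A) = fin_supp A"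
  unfolding Z_fin_top_def fin_supp_def by (auto simp: PiE_iff)

lemma R_sum_map_image: "R_sum_map ` fin_supp A = span A"
proof
  show "R_sum_map ` fin_supp A \<subseteq> span A"
  proof
    fix x assume "x \<in> R_sum_map ` fin_supp A"
    then obtain r where r: "r \<in> fin_supp A" "x = R_sum_map r" by auto
    have "R_sum_map r \<in> span A" unfolding R_sum_map_def
      using fin_supp_sub[OF r(1)] by (intro span_sum span_scale span_base) auto
    then show "x \<in> span A" using r(2) by simp
  qed
next
  show "span A \<subseteq> R_sum_map ` fin_supp A"
  proof
    fix x assume "x \<in> span A"
    then obtain t c where t: "finite t" "t \<subseteq> A" "x = (\<Sum>a\<in>t. c a *\<^sub>R a)"
      unfolding span_explicit by auto
    define r where "r a = (if a \<in> t then c a else 0)" for a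
    have "r \<in> fin_supp A" unfolding r_def by (rule fin_supp_restrict[OF t(1,2)])
    moreover have "R_sum_map r = x"
    proof -
      have "R_sum_map r = (\<Sum>a\<in>t. r a *\<^sub>R a)" by (rule R_sum_map_eq[OF t(1)]) (auto simp: r_def)
      also have "\<dots> = x" unfolding t(3) r_def by simp
      finally show ?thesis .
    qed
    ultimately show "x \<in> R_sum_map ` fin_supp A" by (intro image_eqI[of x R_sum_map r]) auto
  qed
qed

lemma Z_sum_map_image: "Z_sum_map ` fin_supp A = int_span A"
proof
  show "Z_sum_map ` fin_supp A \<subseteq> int_span A"
  proof
    fix x assume "x \<in> Z_sum_map ` fin_supp A"
    then obtain r where r: "r \<in> fin_supp A" "x = Z_sum_map r" by auto
    show "x \<in> int_span A" unfolding int_span_def r(2) Z_sum_map_def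
      using fin_supp_sub[OF r(1)] fin_supp_finite[OF r(1)]
      by (intro CollectI exI[of _ "{a. r a \<noteq> 0}"] exI[of _ r]) simp
  qed
next
  show "int_span A \<subseteq> Z_sum_map ` fin_supp A"
  proof
    fix x assume "x \<in> int_span A"
    then obtain t c where t: "finite t" "t \<subseteq> A" "x = (\<Sum>a\<in>t. of_int (c a) *\<^sub>R a)"
      unfolding int_span_def by auto
    define r where "r a = (if a \<in> t then c a else 0)" for a
    have "r \<in> fin_supp A" unfolding r_def by (rule fin_supp_restrict[OF t(1,2)])
    moreover have "Z_sum_map r = x"
    proof -
      have "Z_sum_map r = (\<Sum>a\<in>t. of_int (r a) *\<^sub>R a)" by (rule Z_sum_map_eq[OF t(1)]) (auto simp: r_def)
      also have "\<dots> = x" unfolding t(3) r_def by simp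
      finally show ?thesis .
    qed
    ultimately show "x \<in> Z_sum_map ` fin_supp A" by (intro image_eqI[of x Z_sum_map r]) auto
  qed
qed



lemma nbhd0_has0: "nbhd0 U \<Longrightarrow> 0 \<in> U"
  unfolding nbhd0_def by auto

lemma top_lin_get:
  fixes A :: "'a::{real_vector,topological_space} set"
  assumes "top_lin_indep A" "nbhd0 W"
  obtains U where "nbhd0 U" "\<And>F r a. finite F \<Longrightarrow> F \<subseteq> A \<Longrightarrow> (\<Sum>a\<in>F. r a *\<^sub>R a) \<in> U \<Longrightarrow> a \<in> F \<Longrightarrow> r a *\<^sub>R a \<in> W"
proof -
  have H: "\<forall>W. nbhd0 W \<longrightarrow> (\<exists>U. nbhd0 U \<and>
        (\<forall>F (r::'a \<Rightarrow> real). finite F \<and> F \<subseteq> A \<and> (\<Sum>a\<in>F. r a *\<^sub>R a) \<in> U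
            \<longrightarrow> (\<forall>a\<in>F. r a *\<^sub>R a \<in> W)))" using assms(1) unfolding top_lin_indep_def .
  obtain U where U1: "nbhd0 U" and U2: "\<forall>F (r::'a \<Rightarrow> real). finite F \<and> F \<subseteq> A \<and> (\<Sum>a\<in>F. r a *\<^sub>R a) \<in> U
            \<longrightarrow> (\<forall>a\<in>F. r a *\<^sub>R a \<in> W)"
    using H[rule_format, OF assms(2)] by (elim exE conjE)
  show thesis
  proof (rule that[OF U1])
    fix F and r :: "'a \<Rightarrow> real" and a
    assume "finite F" "F \<subseteq> A" "(\<Sum>a\<in>F. r a *\<^sub>R a) \<in> U" "a \<in> F"
    then show "r a *\<^sub>R a \<in> W" using U2[rule_format, of F r] by simp
  qed
qed

lemma nonzero_avoid:
  assumes "(v::'a::{real_vector,t2_space}) \<noteq> 0"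
  obtains W where "nbhd0 W" "v \<notin> W"
proof -
  obtain W where "open W" "0 \<in> W" "v \<notin> W" using t1_space[OF assms[symmetric]] by (elim exE conjE)
  then show thesis using that[of W] unfolding nbhd0_def by blast
qed

lemma R_kernel:
  fixes A :: "'a::{real_vector,t2_space} set"
  assumes A0: "A \<subseteq> UNIV - {0}" and tl: "top_lin_indep A"
    and r: "r \<in> fin_supp A" and r0: "R_sum_map r = 0"
  shows "r = (\<lambda>_. 0)"
proof (rule ccontr)
  assume "r \<noteq> (\<lambda>_. 0)"
  then obtain a where ra: "r a \<noteq> 0" by auto
  have aA: "a \<in> A" using fin_supp_sub[OF r] ra by auto
  then have "r a *\<^sub>R a \<noteq> 0" using ra A0 by auto
  then obtain W where nW: "nbhd0 W" and nv: "r a *\<^sub>R a \<notin> W" by (rule nonzero_avoid)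
  obtain U where nU: "nbhd0 U" and Up: "\<And>F r' b. finite F \<Longrightarrow> F \<subseteq> A \<Longrightarrow> (\<Sum>a\<in>F. r' a *\<^sub>R a) \<in> U \<Longrightarrow> b \<in> F \<Longrightarrow> r' b *\<^sub>R b \<in> W"
    by (rule top_lin_get[OF tl nW]) blast
  have "(\<Sum>a\<in>{a. r a \<noteq> 0}. r a *\<^sub>R a) \<in> U" using r0 nbhd0_has0[OF nU] unfolding R_sum_map_def by simp
  then have "r a *\<^sub>R a \<in> W" using Up[OF fin_supp_finite[OF r] fin_supp_sub[OF r]] ra by simp
  then show False using nv by simp
qed

lemma Z_kernel:
  fixes A :: "'a::{real_vector,t2_space} set"
  assumes A0: "A \<subseteq> UNIV - {0}" and ti: "top_indep A"
    and r: "r \<in> fin_supp A" and r0: "Z_sum_map r = 0"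
  shows "r = (\<lambda>_. 0)"
proof (rule ccontr)
  assume "r \<noteq> (\<lambda>_. 0)"
  then obtain a where ra: "r a \<noteq> 0" by auto
  have aA: "a \<in> A" using fin_supp_sub[OF r] ra by auto
  then have "of_int (r a) *\<^sub>R a \<noteq> 0" using ra A0 by auto
  then obtain W where nW: "nbhd0 W" and nv: "of_int (r a) *\<^sub>R a \<notin> W" by (rule nonzero_avoid)
  obtain U where nU: "nbhd0 U" and Up: "\<And>F z b. finite F \<Longrightarrow> F \<subseteq> A \<Longrightarrow> (\<Sum>a\<in>F. of_int (z a) *\<^sub>R a) \<in> U \<Longrightarrow> b \<in> F \<Longrightarrow> of_int (z b) *\<^sub>R b \<in> W"
    by (rule top_indep_get[OF ti nW]) blast
  have "(\<Sum>a\<in>{a. r a \<noteq> 0}. of_int (r a) *\<^sub>R a) \<in> U" using r0 nbhd0_has0[OF nU] unfolding Z_sum_map_def by simp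
  then have "of_int (r a) *\<^sub>R a \<in> W" using Up[OF fin_supp_finite[OF r] fin_supp_sub[OF r]] ra by simp
  then show False using nv by simp
qed

lemma R_inj:
  fixes A :: "'a::{real_vector,t2_space} set"
  assumes A0: "A \<subseteq> UNIV - {0}" and tl: "top_lin_indep A"
  shows "inj_on R_sum_map (fin_supp A)"
proof (rule inj_onI)
  fix r s assume r: "r \<in> fin_supp A" and s: "s \<in> fin_supp A" and eq: "R_sum_map r = R_sum_map s"
  define d where "d a = r a + (-1) * s a" for a
  have dS: "d \<in> fin_supp A" unfolding d_def by (intro fin_supp_add r fin_supp_scale s)
  have e1: "R_sum_map d = R_sum_map r + R_sum_map (\<lambda>a. (-1) * s a)"
    unfolding d_def by (rule R_sum_map_add[OF r fin_supp_scale[OF s]])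
  have e2: "R_sum_map (\<lambda>a. (-1) * s a) = (-1) *\<^sub>R R_sum_map s" by (rule R_sum_map_scale[OF s])
  have "R_sum_map d = R_sum_map r + (-1) *\<^sub>R R_sum_map s" using e1 e2 by simp
  then have "R_sum_map d = 0" using eq by simp
  then have "d = (\<lambda>_. 0)" by (rule R_kernel[OF A0 tl dS])
  then show "r = s" unfolding d_def by (auto simp: fun_eq_iff dest: fun_cong)
qed

lemma Z_inj:
  fixes A :: "'a::{real_vector,t2_space} set"
  assumes A0: "A \<subseteq> UNIV - {0}" and ti: "top_indep A"
  shows "inj_on Z_sum_map (fin_supp A)"
proof (rule inj_onI)
  fix r s assume r: "r \<in> fin_supp A" and s: "s \<in> fin_supp A" and eq: "Z_sum_map r = Z_sum_map s"
  define d where "d a = r a + - s a" for a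
  have dS: "d \<in> fin_supp A" unfolding d_def by (intro fin_supp_add r fin_supp_neg s)
  have "Z_sum_map d = Z_sum_map r + - Z_sum_map s"
    unfolding d_def using Z_sum_map_add[OF r fin_supp_neg[OF s]] Z_sum_map_neg[OF s] by simp
  then have "Z_sum_map d = 0" using eq by simp
  then have "d = (\<lambda>_. 0)" by (rule Z_kernel[OF A0 ti dS])
  then show "r = s" unfolding d_def by (auto simp: fun_eq_iff dest: fun_cong)
qed

lemma proj_cont_R: "continuous_map (R_fin_top A) euclideanreal (\<lambda>r. r a)"
proof -
  let ?T = "\<lambda>a. if a \<in> A then euclideanreal else subtopology euclideanreal {0}"
  have "continuous_map (R_fin_top A) (?T a) (\<lambda>r. r a)"
    unfolding R_fin_top_def by (intro continuous_map_from_subtopology continuous_map_product_projection) simp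
  then show ?thesis by (cases "a \<in> A") (auto dest: continuous_map_into_fulltopology)
qed

lemma proj_cont_Z: "continuous_map (Z_fin_top A) euclideanreal (\<lambda>r. of_int (r a) * c)"
proof -
  let ?T = "\<lambda>a. if a \<in> A then discrete_topology UNIV else discrete_topology {0::int}"
  have 1: "continuous_map (Z_fin_top A) (?T a) (\<lambda>r. r a)"
    unfolding Z_fin_top_def by (intro continuous_map_from_subtopology continuous_map_product_projection) simp
  have 2: "continuous_map (?T a) euclideanreal (\<lambda>n. of_int n * c)" by (cases "a \<in> A") auto
  show ?thesis using continuous_map_compose[OF 1 2] by (simp add: o_def)
qed

lemma functional_on_R_sum:
  assumes gc: "cont_lin_functional g" and fG: "finite {a\<in>A. g a \<noteq> 0}" and r: "r \<in> fin_supp A"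
  shows "g (R_sum_map r) = (\<Sum>a\<in>{a\<in>A. g a \<noteq> 0}. r a * g a)"
proof -
  let ?G = "{a\<in>A. g a \<noteq> 0}"
  let ?S = "{a. r a \<noteq> 0} \<union> ?G"
  have fS: "finite ?S" using fG fin_supp_finite[OF r] by simp
  have "g (R_sum_map r) = g (\<Sum>a\<in>?S. r a *\<^sub>R a)" by (subst R_sum_map_eq[OF fS]) auto
  also have "\<dots> = (\<Sum>a\<in>?S. r a * g a)" by (rule clf_sum[OF gc])
  also have "\<dots> = (\<Sum>a\<in>?G. r a * g a)"
    using fin_supp_sub[OF r] by (intro sum.mono_neutral_right[OF fS]) auto
  finally show ?thesis .
qed

lemma functional_on_Z_sum:
  assumes gc: "cont_lin_functional g" and fG: "finite {a\<in>A. g a \<noteq> 0}" and r: "r \<in> fin_supp A"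
  shows "g (Z_sum_map r) = (\<Sum>a\<in>{a\<in>A. g a \<noteq> 0}. of_int (r a) * g a)"
proof -
  let ?G = "{a\<in>A. g a \<noteq> 0}"
  let ?S = "{a. r a \<noteq> 0} \<union> ?G"
  have fS: "finite ?S" using fG fin_supp_finite[OF r] by simp
  have "g (Z_sum_map r) = g (\<Sum>a\<in>?S. of_int (r a) *\<^sub>R a)" by (subst Z_sum_map_eq[OF fS]) auto
  also have "\<dots> = (\<Sum>a\<in>?S. of_int (r a) * g a)" by (rule clf_sum[OF gc])
  also have "\<dots> = (\<Sum>a\<in>?G. of_int (r a) * g a)"
    using fin_supp_sub[OF r] by (intro sum.mono_neutral_right[OF fS]) auto
  finally show ?thesis .
qed

lemma R_cont:
  assumes weak: "weak_topology_tvs TYPE('a::{real_vector,topological_space})"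
    and fs: "FinSupp (A::'a set)"
  shows "continuous_map (R_fin_top A) (top_of_set (span A)) R_sum_map"
proof (rule continuous_map_into_subtopology)
  show "continuous_map (R_fin_top A) euclidean R_sum_map"
  proof (rule cont_into_weak[OF weak])
    fix g :: "'a \<Rightarrow> real" assume gc: "cont_lin_functional g"
    have fG: "finite {a\<in>A. g a \<noteq> 0}" using fs gc unfolding FinSupp_def by auto
    have "continuous_map (R_fin_top A) euclideanreal (\<lambda>r. \<Sum>a\<in>{a\<in>A. g a \<noteq> 0}. r a * g a)"
      by (intro continuous_map_sum[OF fG] continuous_map_real_mult_right proj_cont_R)
    then show "continuous_map (R_fin_top A) euclideanreal (\<lambda>r. g (R_sum_map r))"
      by (rule continuous_map_eq) (simp add: topspace_R_fin_top functional_on_R_sum[OF gc fG])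
  qed
  show "R_sum_map \<in> topspace (R_fin_top A) \<rightarrow> span A"
    using R_sum_map_image[of A] by (auto simp: topspace_R_fin_top)
qed

lemma Z_cont:
  assumes weak: "weak_topology_tvs TYPE('a::{real_vector,topological_space})"
    and fs: "FinSupp (A::'a set)"
  shows "continuous_map (Z_fin_top A) (top_of_set (int_span A)) Z_sum_map"
proof (rule continuous_map_into_subtopology)
  show "continuous_map (Z_fin_top A) euclidean Z_sum_map"
  proof (rule cont_into_weak[OF weak])
    fix g :: "'a \<Rightarrow> real" assume gc: "cont_lin_functional g"
    have fG: "finite {a\<in>A. g a \<noteq> 0}" using fs gc unfolding FinSupp_def by auto
    have "continuous_map (Z_fin_top A) euclideanreal (\<lambda>r. \<Sum>a\<in>{a\<in>A. g a \<noteq> 0}. of_int (r a) * g a)"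
      by (intro continuous_map_sum[OF fG] proj_cont_Z)
    then show "continuous_map (Z_fin_top A) euclideanreal (\<lambda>r. g (Z_sum_map r))"
      by (rule continuous_map_eq) (simp add: topspace_Z_fin_top functional_on_Z_sum[OF gc fG])
  qed
  show "Z_sum_map \<in> topspace (Z_fin_top A) \<rightarrow> int_span A"
    using Z_sum_map_image[of A] by (auto simp: topspace_Z_fin_top)
qed



lemma R_iso_fwd:
  fixes A :: "'a::{real_vector,t2_space} set"
  assumes weak: "weak_topology_tvs TYPE('a)"
    and A0: "A \<subseteq> UNIV - {0}" and fs: "FinSupp A" and tl: "top_lin_indep A"
  shows "R_sum_iso A"
proof -
  define h where "h = inv_into (fin_supp A) R_sum_map"
  have inj: "inj_on R_sum_map (fin_supp A)" by (rule R_inj[OF A0 tl])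
  have img: "R_sum_map ` fin_supp A = span A" by (rule R_sum_map_image)
  have hin: "h y \<in> fin_supp A" if "y \<in> span A" for y
    unfolding h_def using that img by (intro inv_into_into[of y R_sum_map "fin_supp A"]) auto
  have hR: "R_sum_map (h y) = y" if "y \<in> span A" for y
    unfolding h_def using that img by (intro f_inv_into_f[of y R_sum_map "fin_supp A"]) auto
  have Rh: "h (R_sum_map r) = r" if "r \<in> fin_supp A" for r
    unfolding h_def using inj that by (rule inv_into_f_f)
  have cont_coord: "continuous_on (span A) (\<lambda>y. h y k)" if kA: "k \<in> A" for k
    unfolding continuous_on_topological
  proof (intro ballI allI impI)
    fix x B assume xS: "x \<in> span A" and Bo: "open B" and Bx: "h x k \<in> B"
    obtain \<epsilon> where \<epsilon>: "\<epsilon> > 0" "ball (h x k) \<epsilon> \<subseteq> B" using Bo Bx open_contains_ball by blast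
    have k0: "k \<noteq> 0" using kA A0 by auto
    obtain f where fc: "cont_lin_functional f" and fk: "f k \<noteq> 0" using sep_functional[OF weak k0] by auto
    have pos: "\<epsilon> * \<bar>f k\<bar> > 0" using \<epsilon>(1) fk by simp
    obtain U where nU: "nbhd0 U" and Up: "\<And>F r b. finite F \<Longrightarrow> F \<subseteq> A \<Longrightarrow> (\<Sum>a\<in>F. r a *\<^sub>R a) \<in> U \<Longrightarrow> b \<in> F \<Longrightarrow> r b *\<^sub>R b \<in> {v. \<bar>f v\<bar> < \<epsilon> * \<bar>f k\<bar>}"
      by (rule top_lin_get[OF tl nbhd0_single[OF fc pos]]) blast
    obtain F' \<delta> where F': "finite F'" "\<forall>f\<in>F'. cont_lin_functional f" "\<delta> > 0" "{y. \<forall>f\<in>F'. \<bar>f y\<bar> < \<delta>} \<subseteq> U"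
      using nbhd0_basis[OF weak nU] by (elim exE conjE)
    have "open (Nb F' x \<delta>)" by (rule open_Nb[OF F'(1,2)])
    moreover have "x \<in> Nb F' x \<delta>" unfolding Nb_def using F'(3) by simp
    moreover have "h y k \<in> B" if yS: "y \<in> span A" and yN: "y \<in> Nb F' x \<delta>" for y
    proof -
      define d where "d a = h y a + (-1) * h x a" for a
      have dS: "d \<in> fin_supp A" unfolding d_def by (intro fin_supp_add hin yS fin_supp_scale xS)
      have e1: "R_sum_map d = R_sum_map (h y) + R_sum_map (\<lambda>a. (-1) * h x a)"
        unfolding d_def by (rule R_sum_map_add[OF hin[OF yS] fin_supp_scale[OF hin[OF xS]]])
      have e2: "R_sum_map (\<lambda>a. (-1) * h x a) = (-1) *\<^sub>R R_sum_map (h x)" by (rule R_sum_map_scale[OF hin[OF xS]])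
      have Rd: "R_sum_map d = y - x" using e1 e2 hR[OF xS] hR[OF yS] by simp
      have "y - x \<in> {y. \<forall>f\<in>F'. \<bar>f y\<bar> < \<delta>}"
      proof (safe)
        fix g assume gF: "g \<in> F'"
        have gc: "cont_lin_functional g" using F'(2) gF by auto
        have "\<bar>g y - g x\<bar> < \<delta>" using yN gF unfolding Nb_def by auto
        then show "\<bar>g (y - x)\<bar> < \<delta>" using linear_diff[OF clf_linear[OF gc]] by simp
      qed
      then have "y - x \<in> U" using F'(4) by blast
      then have inU: "(\<Sum>a\<in>{a. d a \<noteq> 0}. d a *\<^sub>R a) \<in> U" using Rd unfolding R_sum_map_def by simp
      have "\<bar>d k\<bar> < \<epsilon>"
      proof (cases "d k = 0")
        case True then show ?thesis using \<epsilon>(1) by simp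
      next
        case False
        then have "d k *\<^sub>R k \<in> {v. \<bar>f v\<bar> < \<epsilon> * \<bar>f k\<bar>}"
          using Up[OF fin_supp_finite[OF dS] fin_supp_sub[OF dS] inU] by simp
        then have "\<bar>d k\<bar> * \<bar>f k\<bar> < \<epsilon> * \<bar>f k\<bar>"
          using linear_cmul[OF clf_linear[OF fc]] by (simp add: abs_mult)
        then show ?thesis using fk by simp
      qed
      then have "h y k \<in> ball (h x k) \<epsilon>" unfolding d_def by (simp add: dist_real_def abs_minus_commute)
      then show ?thesis using \<epsilon>(2) by blast
    qed
    ultimately show "\<exists>A'. open A' \<and> x \<in> A' \<and> (\<forall>y\<in>span A. y \<in> A' \<longrightarrow> h y k \<in> B)"
      by (intro exI[of _ "Nb F' x \<delta>"] conjI) auto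
  qed
  let ?T = "\<lambda>a. if a \<in> A then euclideanreal else subtopology euclideanreal {0::real}"
  have hcont: "continuous_map (top_of_set (span A)) (R_fin_top A) h"
    unfolding R_fin_top_def
  proof (rule continuous_map_into_subtopology)
    show "h \<in> topspace (top_of_set (span A)) \<rightarrow> fin_supp A" using hin by auto
    show "continuous_map (top_of_set (span A)) (product_topology ?T UNIV) h"
      unfolding continuous_map_componentwise_UNIV
    proof
      fix k
      show "continuous_map (top_of_set (span A)) (?T k) (\<lambda>y. h y k)"
      proof (cases "k \<in> A")
        case True
        then show ?thesis using cont_coord[OF True] by simp
      next
        case False
        have "continuous_map (top_of_set (span A)) (subtopology euclideanreal {0::real}) (\<lambda>y. 0)"
          by simp
        moreover have "0 = h y k" if "y \<in> topspace (top_of_set (span A))" for y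
          using hin[of y] that False unfolding fin_supp_def by auto
        ultimately have "continuous_map (top_of_set (span A)) (subtopology euclideanreal {0::real}) (\<lambda>y. h y k)"
          by (rule continuous_map_eq)
        then show ?thesis using False by simp
      qed
    qed
  qed
  have "homeomorphic_maps (R_fin_top A) (top_of_set (span A)) R_sum_map h"
    unfolding homeomorphic_maps_def
    using R_cont[OF weak fs] hcont Rh hR by (simp add: topspace_R_fin_top)
  then have "homeomorphic_map (R_fin_top A) (top_of_set (span A)) R_sum_map"
    using homeomorphic_map_maps by blast
  then show ?thesis unfolding R_sum_iso_def
    using R_sum_map_add R_sum_map_scale by blast
qed


lemma local_const_discrete:
  fixes \<phi> :: "'a::topological_space \<Rightarrow> 'b"
  assumes "\<forall>x\<in>S. \<exists>Ov. open Ov \<and> x \<in> Ov \<and> (\<forall>y\<in>S. y \<in> Ov \<longrightarrow> \<phi> y = \<phi> x)"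
  shows "continuous_map (top_of_set S) (discrete_topology UNIV) \<phi>"
  unfolding continuous_map_def
proof (intro conjI allI impI)
  show "\<phi> \<in> topspace (top_of_set S) \<rightarrow> topspace (discrete_topology UNIV)" by simp
  fix U :: "'b set" assume "openin (discrete_topology UNIV) U"
  show "openin (top_of_set S) {x \<in> topspace (top_of_set S). \<phi> x \<in> U}"
  proof (subst openin_subopen, intro ballI)
    fix x assume x: "x \<in> {x \<in> topspace (top_of_set S). \<phi> x \<in> U}"
    then have xS: "x \<in> S" by simp
    obtain Ov where Ov: "open Ov" "x \<in> Ov" "\<forall>y\<in>S. y \<in> Ov \<longrightarrow> \<phi> y = \<phi> x" using assms xS by blast
    have "openin (top_of_set S) (S \<inter> Ov)" using Ov(1) by (auto simp: openin_open)
    moreover have "S \<inter> Ov \<subseteq> {x \<in> topspace (top_of_set S). \<phi> x \<in> U}" using Ov(3) x by auto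
    ultimately show "\<exists>T. openin (top_of_set S) T \<and> x \<in> T \<and> T \<subseteq> {x \<in> topspace (top_of_set S). \<phi> x \<in> U}"
      using xS Ov(2) by (intro exI[of _ "S \<inter> Ov"]) auto
  qed
qed

lemma Z_iso_fwd:
  fixes A :: "'a::{real_vector,t2_space} set"
  assumes weak: "weak_topology_tvs TYPE('a)"
    and A0: "A \<subseteq> UNIV - {0}" and fs: "FinSupp A" and ti: "top_indep A"
  shows "Z_sum_iso A"
proof -
  define h where "h = inv_into (fin_supp A) Z_sum_map"
  have inj: "inj_on Z_sum_map (fin_supp A)" by (rule Z_inj[OF A0 ti])
  have img: "Z_sum_map ` fin_supp A = int_span A" by (rule Z_sum_map_image)
  have hin: "h y \<in> fin_supp A" if "y \<in> int_span A" for y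
    unfolding h_def using that img by (intro inv_into_into[of y Z_sum_map "fin_supp A"]) auto
  have hR: "Z_sum_map (h y) = y" if "y \<in> int_span A" for y
    unfolding h_def using that img by (intro f_inv_into_f[of y Z_sum_map "fin_supp A"]) auto
  have Rh: "h (Z_sum_map r) = r" if "r \<in> fin_supp A" for r
    unfolding h_def using inj that by (rule inv_into_f_f)
  have cont_coord: "continuous_map (top_of_set (int_span A)) (discrete_topology UNIV) (\<lambda>y. h y k)"
    if kA: "k \<in> A" for k
  proof (rule local_const_discrete, intro ballI)
    fix x assume xS: "x \<in> int_span A"
    have k0: "k \<noteq> 0" using kA A0 by auto
    obtain f where fc: "cont_lin_functional f" and fk: "f k \<noteq> 0" using sep_functional[OF weak k0] by auto
    have pos: "\<bar>f k\<bar> > 0" using fk by simp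
    obtain U where nU: "nbhd0 U" and Up: "\<And>F z b. finite F \<Longrightarrow> F \<subseteq> A \<Longrightarrow> (\<Sum>a\<in>F. of_int (z a) *\<^sub>R a) \<in> U \<Longrightarrow> b \<in> F \<Longrightarrow> of_int (z b) *\<^sub>R b \<in> {v. \<bar>f v\<bar> < \<bar>f k\<bar>}"
      by (rule top_indep_get[OF ti nbhd0_single[OF fc pos]]) blast
    obtain F' \<delta> where F': "finite F'" "\<forall>f\<in>F'. cont_lin_functional f" "\<delta> > 0" "{y. \<forall>f\<in>F'. \<bar>f y\<bar> < \<delta>} \<subseteq> U"
      using nbhd0_basis[OF weak nU] by (elim exE conjE)
    have "open (Nb F' x \<delta>)" by (rule open_Nb[OF F'(1,2)])
    moreover have "x \<in> Nb F' x \<delta>" unfolding Nb_def using F'(3) by simp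
    moreover have "h y k = h x k" if yS: "y \<in> int_span A" and yN: "y \<in> Nb F' x \<delta>" for y
    proof -
      define d where "d a = h y a + - h x a" for a
      have dS: "d \<in> fin_supp A" unfolding d_def by (intro fin_supp_add hin yS fin_supp_neg xS)
      have e1: "Z_sum_map d = Z_sum_map (h y) + Z_sum_map (\<lambda>a. - h x a)"
        unfolding d_def by (rule Z_sum_map_add[OF hin[OF yS] fin_supp_neg[OF hin[OF xS]]])
      have e2: "Z_sum_map (\<lambda>a. - h x a) = - Z_sum_map (h x)" by (rule Z_sum_map_neg[OF hin[OF xS]])
      have Rd: "Z_sum_map d = y - x" using e1 e2 hR[OF xS] hR[OF yS] by simp
      have "y - x \<in> {y. \<forall>f\<in>F'. \<bar>f y\<bar> < \<delta>}"
      proof (safe)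
        fix g assume gF: "g \<in> F'"
        have gc: "cont_lin_functional g" using F'(2) gF by auto
        have "\<bar>g y - g x\<bar> < \<delta>" using yN gF unfolding Nb_def by auto
        then show "\<bar>g (y - x)\<bar> < \<delta>" using linear_diff[OF clf_linear[OF gc]] by simp
      qed
      then have "y - x \<in> U" using F'(4) by blast
      then have inU: "(\<Sum>a\<in>{a. d a \<noteq> 0}. of_int (d a) *\<^sub>R a) \<in> U" using Rd unfolding Z_sum_map_def by simp
      have "d k = 0"
      proof (rule ccontr)
        assume dk: "d k \<noteq> 0"
        then have "of_int (d k) *\<^sub>R k \<in> {v. \<bar>f v\<bar> < \<bar>f k\<bar>}"
          using Up[OF fin_supp_finite[OF dS] fin_supp_sub[OF dS] inU] by simp
        then have "\<bar>of_int (d k)\<bar> * \<bar>f k\<bar> < 1 * \<bar>f k\<bar>"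
          using linear_cmul[OF clf_linear[OF fc]] by (simp add: abs_mult)
        then have "\<bar>of_int (d k)\<bar> < (1::real)" using fk by (simp only: mult_less_cancel_right)
        then show False using dk by linarith
      qed
      then show ?thesis unfolding d_def by simp
    qed
    ultimately show "\<exists>Ov. open Ov \<and> x \<in> Ov \<and> (\<forall>y\<in>int_span A. y \<in> Ov \<longrightarrow> h y k = h x k)"
      by (intro exI[of _ "Nb F' x \<delta>"] conjI) auto
  qed
  let ?T = "\<lambda>a. if a \<in> A then discrete_topology UNIV else discrete_topology {0::int}"
  have hcont: "continuous_map (top_of_set (int_span A)) (Z_fin_top A) h"
    unfolding Z_fin_top_def
  proof (rule continuous_map_into_subtopology)
    show "h \<in> topspace (top_of_set (int_span A)) \<rightarrow> fin_supp A" using hin by auto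
    show "continuous_map (top_of_set (int_span A)) (product_topology ?T UNIV) h"
      unfolding continuous_map_componentwise_UNIV
    proof
      fix k
      show "continuous_map (top_of_set (int_span A)) (?T k) (\<lambda>y. h y k)"
      proof (cases "k \<in> A")
        case True
        then show ?thesis using cont_coord[OF True] by simp
      next
        case False
        have "continuous_map (top_of_set (int_span A)) (discrete_topology {0::int}) (\<lambda>y. 0)"
          by simp
        moreover have "0 = h y k" if "y \<in> topspace (top_of_set (int_span A))" for y
          using hin[of y] that False unfolding fin_supp_def by auto
        ultimately have "continuous_map (top_of_set (int_span A)) (discrete_topology {0::int}) (\<lambda>y. h y k)"
          by (rule continuous_map_eq)
        then show ?thesis using False by simp
      qed
    qed
  qed
  have "homeomorphic_maps (Z_fin_top A) (top_of_set (int_span A)) Z_sum_map h"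
    unfolding homeomorphic_maps_def
    using Z_cont[OF weak fs] hcont Rh hR by (simp add: topspace_Z_fin_top)
  then have "homeomorphic_map (Z_fin_top A) (top_of_set (int_span A)) Z_sum_map"
    using homeomorphic_map_maps by blast
  then show ?thesis unfolding Z_sum_iso_def
    using Z_sum_map_add by blast
qed



lemma R_iso_maps:
  assumes "R_sum_iso A"
  obtains g where "continuous_map (R_fin_top A) (top_of_set (span A)) R_sum_map"
    "continuous_map (top_of_set (span A)) (R_fin_top A) g"
    "\<And>r. r \<in> fin_supp A \<Longrightarrow> g (R_sum_map r) = r"
    "\<And>y. y \<in> span A \<Longrightarrow> R_sum_map (g y) = y"
proof -
  have "homeomorphic_map (R_fin_top A) (top_of_set (span A)) R_sum_map"
    using assms unfolding R_sum_iso_def by blast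
  then obtain g where "homeomorphic_maps (R_fin_top A) (top_of_set (span A)) R_sum_map g"
    unfolding homeomorphic_map_maps by blast
  then show thesis unfolding homeomorphic_maps_def by (intro that[of g]) (auto simp: topspace_R_fin_top)
qed

lemma Z_iso_maps:
  assumes "Z_sum_iso A"
  obtains g where "continuous_map (Z_fin_top A) (top_of_set (int_span A)) Z_sum_map"
    "continuous_map (top_of_set (int_span A)) (Z_fin_top A) g"
    "\<And>r. r \<in> fin_supp A \<Longrightarrow> g (Z_sum_map r) = r"
    "\<And>y. y \<in> int_span A \<Longrightarrow> Z_sum_map (g y) = y"
proof -
  have "homeomorphic_map (Z_fin_top A) (top_of_set (int_span A)) Z_sum_map"
    using assms unfolding Z_sum_iso_def by blast
  then obtain g where "homeomorphic_maps (Z_fin_top A) (top_of_set (int_span A)) Z_sum_map g"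
    unfolding homeomorphic_map_maps by blast
  then show thesis unfolding homeomorphic_maps_def by (intro that[of g]) (auto simp: topspace_Z_fin_top)
qed

lemma open_functional_lt: "cont_lin_functional g \<Longrightarrow> open {v. \<bar>g v\<bar> < c}"
proof -
  assume "cont_lin_functional g"
  then have "continuous_on UNIV g" unfolding cont_lin_functional_def by simp
  moreover have "{t::real. \<bar>t\<bar> < c} = ball 0 c" by (auto simp: dist_real_def)
  then have "open {t::real. \<bar>t\<bar> < c}" by simp
  ultimately have "open (g -` {t::real. \<bar>t\<bar> < c})" using open_vimage by blast
  then show ?thesis by (simp add: vimage_def)
qed

lemma R_sum_map_single: "R_sum_map (\<lambda>b. if b = a then c else 0) = c *\<^sub>R a"
  by (subst R_sum_map_eq[of "{a}"]) auto

lemma Z_sum_map_single: "Z_sum_map (\<lambda>b. if b = a then c else 0) = of_int c *\<^sub>R a"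
  by (subst Z_sum_map_eq[of "{a}"]) auto

lemma R_iso_finsupp:
  fixes A :: "'a::{real_vector,topological_space} set"
  assumes iso: "R_sum_iso A"
  shows "FinSupp A"
  unfolding FinSupp_def
proof (intro allI impI, rule ccontr)
  fix g :: "'a \<Rightarrow> real" assume gc: "cont_lin_functional g" and inf: "infinite {a\<in>A. g a \<noteq> 0}"
  have c1: "continuous_map (R_fin_top A) (top_of_set (span A)) R_sum_map"
    using iso unfolding R_sum_iso_def by (intro homeomorphic_imp_continuous_map) blast
  have c2: "continuous_map (R_fin_top A) euclidean R_sum_map" using continuous_map_into_fulltopology[OF c1] .
  let ?V = "{v. \<bar>g v\<bar> < 1}"
  let ?P = "product_topology (\<lambda>a. if a \<in> A then euclideanreal else subtopology euclideanreal {0::real}) UNIV"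
  have O: "openin (R_fin_top A) {r \<in> topspace (R_fin_top A). R_sum_map r \<in> ?V}"
    by (rule openin_continuous_map_preimage[OF c2]) (simp add: open_functional_lt[OF gc])
  have O': "openin (subtopology ?P (fin_supp A)) {r \<in> fin_supp A. R_sum_map r \<in> ?V}"
    using O unfolding topspace_R_fin_top unfolding R_fin_top_def .
  obtain T where T: "openin ?P T" "{r \<in> fin_supp A. R_sum_map r \<in> ?V} = T \<inter> fin_supp A"
    using O' unfolding openin_subtopology by (elim exE conjE)
  define z0 :: "'a \<Rightarrow> real" where "z0 = (\<lambda>_. 0)"
  have z0S: "z0 \<in> fin_supp A" unfolding z0_def fin_supp_def by simp
  have "R_sum_map z0 = 0" unfolding z0_def R_sum_map_def by simp
  then have "z0 \<in> {r \<in> fin_supp A. R_sum_map r \<in> ?V}" using z0S linear_0[OF clf_linear[OF gc]] by simp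
  then have "z0 \<in> T \<inter> fin_supp A" unfolding T(2) .
  then have z0T: "z0 \<in> T" by simp
  let ?Tc = "\<lambda>a. if a \<in> A then euclideanreal else subtopology euclideanreal {0::real}"
  obtain U where U: "finite {i \<in> UNIV. U i \<noteq> topspace (?Tc i)}" "\<forall>i\<in>UNIV. openin (?Tc i) (U i)"
      "z0 \<in> PiE UNIV U" "PiE UNIV U \<subseteq> T"
    using bspec[OF T(1)[unfolded openin_product_topology_alt] z0T] by (elim exE conjE)
  let ?G = "{i \<in> UNIV. U i \<noteq> topspace (?Tc i)}"
  have "infinite ({a\<in>A. g a \<noteq> 0} - ?G)" using Diff_infinite_finite[OF U(1) inf] .
  then have "{a\<in>A. g a \<noteq> 0} - ?G \<noteq> {}" by (metis finite.emptyI)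
  then obtain a where a: "a \<in> A" "g a \<noteq> 0" "a \<notin> ?G" by auto
  then have Ua: "U a = UNIV" by simp
  define r :: "'a \<Rightarrow> real" where "r = (\<lambda>b. if b = a then 1 / g a else 0)"
  have "r \<in> PiE UNIV U"
  proof -
    have "r b \<in> U b" for b
    proof (cases "b = a")
      case True then show ?thesis using Ua by simp
    next
      case False then have "r b = z0 b" unfolding r_def z0_def by simp
      then show ?thesis using U(3) by (simp add: PiE_iff)
    qed
    then show ?thesis by (simp add: PiE_iff)
  qed
  moreover have "r \<in> fin_supp A"
  proof -
    have "r = (\<lambda>b. if b \<in> {a} then 1 / g a else 0)" unfolding r_def by auto
    then show ?thesis using fin_supp_restrict[of "{a}" A "\<lambda>_. 1 / g a"] a(1) by simp
  qed
  ultimately have "r \<in> T \<inter> fin_supp A" using U(4) by blast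
  then have "r \<in> {r \<in> fin_supp A. R_sum_map r \<in> ?V}" unfolding T(2) .
  then have "R_sum_map r \<in> ?V" by simp
  moreover have "R_sum_map r = (1 / g a) *\<^sub>R a" unfolding r_def by (rule R_sum_map_single)
  ultimately have "\<bar>(1 / g a) * g a\<bar> < 1" using linear_cmul[OF clf_linear[OF gc]] by simp
  then show False using a(2) by simp
qed


lemma Z_iso_finsupp:
  fixes A :: "'a::{real_vector,topological_space} set"
  assumes iso: "Z_sum_iso A"
  shows "FinSupp A"
  unfolding FinSupp_def
proof (intro allI impI, rule ccontr)
  fix g :: "'a \<Rightarrow> real" assume gc: "cont_lin_functional g" and inf: "infinite {a\<in>A. g a \<noteq> 0}"
  have c1: "continuous_map (Z_fin_top A) (top_of_set (int_span A)) Z_sum_map"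
    using iso unfolding Z_sum_iso_def by (intro homeomorphic_imp_continuous_map) blast
  have c2: "continuous_map (Z_fin_top A) euclidean Z_sum_map" using continuous_map_into_fulltopology[OF c1] .
  let ?V = "{v. \<bar>g v\<bar> < 1}"
  let ?P = "product_topology (\<lambda>a. if a \<in> A then discrete_topology UNIV else discrete_topology {0::int}) UNIV"
  have O: "openin (Z_fin_top A) {r \<in> topspace (Z_fin_top A). Z_sum_map r \<in> ?V}"
    by (rule openin_continuous_map_preimage[OF c2]) (simp add: open_functional_lt[OF gc])
  have O': "openin (subtopology ?P (fin_supp A)) {r \<in> fin_supp A. Z_sum_map r \<in> ?V}"
    using O unfolding topspace_Z_fin_top unfolding Z_fin_top_def .
  obtain T where T: "openin ?P T" "{r \<in> fin_supp A. Z_sum_map r \<in> ?V} = T \<inter> fin_supp A"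
    using O' unfolding openin_subtopology by (elim exE conjE)
  define z0 :: "'a \<Rightarrow> int" where "z0 = (\<lambda>_. 0)"
  have z0S: "z0 \<in> fin_supp A" unfolding z0_def fin_supp_def by simp
  have "Z_sum_map z0 = 0" unfolding z0_def Z_sum_map_def by simp
  then have "z0 \<in> {r \<in> fin_supp A. Z_sum_map r \<in> ?V}" using z0S linear_0[OF clf_linear[OF gc]] by simp
  then have "z0 \<in> T \<inter> fin_supp A" unfolding T(2) .
  then have z0T: "z0 \<in> T" by simp
  let ?Tc = "\<lambda>a. if a \<in> A then discrete_topology UNIV else discrete_topology {0::int}"
  obtain U where U: "finite {i \<in> UNIV. U i \<noteq> topspace (?Tc i)}" "\<forall>i\<in>UNIV. openin (?Tc i) (U i)"
      "z0 \<in> PiE UNIV U" "PiE UNIV U \<subseteq> T"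
    using bspec[OF T(1)[unfolded openin_product_topology_alt] z0T] by (elim exE conjE)
  let ?G = "{i \<in> UNIV. U i \<noteq> topspace (?Tc i)}"
  have "infinite ({a\<in>A. g a \<noteq> 0} - ?G)" using Diff_infinite_finite[OF U(1) inf] .
  then have "{a\<in>A. g a \<noteq> 0} - ?G \<noteq> {}" by (metis finite.emptyI)
  then obtain a where a: "a \<in> A" "g a \<noteq> 0" "a \<notin> ?G" by auto
  then have Ua: "U a = UNIV" by simp
  define k where "k = \<lceil>1 / \<bar>g a\<bar>\<rceil>"
  define r :: "'a \<Rightarrow> int" where "r = (\<lambda>b. if b = a then k else 0)"
  have "r \<in> PiE UNIV U"
  proof -
    have "r b \<in> U b" for b
    proof (cases "b = a")
      case True then show ?thesis using Ua by simp
    next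
      case False then have "r b = z0 b" unfolding r_def z0_def by simp
      then show ?thesis using U(3) by (simp add: PiE_iff)
    qed
    then show ?thesis by (simp add: PiE_iff)
  qed
  moreover have "r \<in> fin_supp A"
  proof -
    have "r = (\<lambda>b. if b \<in> {a} then k else 0)" unfolding r_def by auto
    then show ?thesis using fin_supp_restrict[of "{a}" A "\<lambda>_. k"] a(1) by simp
  qed
  ultimately have "r \<in> T \<inter> fin_supp A" using U(4) by blast
  then have "r \<in> {r \<in> fin_supp A. Z_sum_map r \<in> ?V}" unfolding T(2) .
  then have "Z_sum_map r \<in> ?V" by simp
  moreover have "Z_sum_map r = of_int k *\<^sub>R a" unfolding r_def by (rule Z_sum_map_single)
  ultimately have lt: "\<bar>of_int k * g a\<bar> < 1" using linear_cmul[OF clf_linear[OF gc]] by simp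
  have k1: "of_int k \<ge> 1 / \<bar>g a\<bar>" unfolding k_def by simp
  then have "of_int k * \<bar>g a\<bar> \<ge> 1" using a(2) by (simp add: field_simps)
  moreover have "of_int k \<ge> (0::real)" using k1 by (smt (verit) divide_nonneg_nonneg abs_ge_zero)
  ultimately show False using lt by (simp add: abs_mult)
qed


lemma R_iso_lin:
  fixes A :: "'a::{real_vector,topological_space} set"
  assumes weak: "weak_topology_tvs TYPE('a)" and iso: "R_sum_iso A"
  shows "top_lin_indep A"
  unfolding top_lin_indep_def
proof (intro allI impI)
  have fs: "FinSupp A" by (rule R_iso_finsupp[OF iso])
  obtain h where hc: "continuous_map (top_of_set (span A)) (R_fin_top A) h"
    and hR: "\<And>r. r \<in> fin_supp A \<Longrightarrow> h (R_sum_map r) = r"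
    using R_iso_maps[OF iso] by metis
  fix W :: "'a set" assume nW: "nbhd0 W"
  obtain F \<epsilon> where F: "finite F" "\<forall>f\<in>F. cont_lin_functional f" "\<epsilon> > 0" "{y. \<forall>f\<in>F. \<bar>f y\<bar> < \<epsilon>} \<subseteq> W"
    using nbhd0_basis[OF weak nW] by (elim exE conjE)
  define G where "G = (\<Union>f\<in>F. {a\<in>A. f a \<noteq> 0})"
  have fG: "finite G" unfolding G_def using F(1,2) fs unfolding FinSupp_def by auto
  have GA: "G \<subseteq> A" unfolding G_def by auto
  define C where "C = (\<Sum>a\<in>G. \<Sum>f\<in>F. \<bar>f a\<bar>)"
  have C0: "C \<ge> 0" unfolding C_def by (simp add: sum_nonneg)
  have Cb: "\<bar>f a\<bar> \<le> C" if "f \<in> F" "a \<in> G" for f a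
  proof -
    have "\<bar>f a\<bar> \<le> (\<Sum>f\<in>F. \<bar>f a\<bar>)" using that F(1) by (intro member_le_sum) auto
    also have "\<dots> \<le> C" unfolding C_def using that fG
      by (intro member_le_sum[of a G "\<lambda>a. \<Sum>f\<in>F. \<bar>f a\<bar>"]) (auto simp: sum_nonneg)
    finally show ?thesis .
  qed
  define \<eta> where "\<eta> = \<epsilon> / (1 + C)"
  have \<eta>0: "\<eta> > 0" unfolding \<eta>_def using F(3) C0 by simp
  have \<eta>C: "\<eta> * C < \<epsilon>"
  proof -
    have "\<eta> * C = \<epsilon> * (C / (1 + C))" unfolding \<eta>_def by simp
    also have "\<dots> < \<epsilon> * 1" using F(3) C0 by (intro mult_strict_left_mono) auto
    finally show ?thesis by simp
  qed
  define z0 :: "'a \<Rightarrow> real" where "z0 = (\<lambda>_. 0)"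
  have z0S: "z0 \<in> fin_supp A" unfolding z0_def fin_supp_def by simp
  have "R_sum_map z0 = 0" unfolding z0_def R_sum_map_def by simp
  then have h0: "h 0 = z0" using hR[OF z0S] by simp
  let ?Tc = "\<lambda>a. if a \<in> A then euclideanreal else subtopology euclideanreal {0::real}"
  have coord: "continuous_on (span A) (\<lambda>y. h y k)" if kA: "k \<in> A" for k
  proof -
    have "continuous_map (top_of_set (span A)) (product_topology ?Tc UNIV) h"
      using hc unfolding R_fin_top_def by (rule continuous_map_into_fulltopology)
    then have "continuous_map (top_of_set (span A)) (?Tc k) (\<lambda>y. h y k)"
      unfolding continuous_map_componentwise_UNIV by blast
    then show ?thesis using kA by simp
  qed
  have "\<forall>k\<in>G. \<exists>Ov. open Ov \<and> 0 \<in> Ov \<and> (\<forall>y\<in>span A. y \<in> Ov \<longrightarrow> \<bar>h y k\<bar> < \<eta>)"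
  proof
    fix k assume "k \<in> G"
    then have kA: "k \<in> A" using GA by auto
    have ob: "open (ball (0::real) \<eta>)" by simp
    have "h 0 k \<in> ball 0 \<eta>" using h0 \<eta>0 unfolding z0_def by simp
    then obtain Ov where "open Ov" "0 \<in> Ov" "\<forall>y\<in>span A. y \<in> Ov \<longrightarrow> h y k \<in> ball 0 \<eta>"
      using coord[OF kA] span_zero[of A] ob unfolding continuous_on_topological by metis
    then show "\<exists>Ov. open Ov \<and> 0 \<in> Ov \<and> (\<forall>y\<in>span A. y \<in> Ov \<longrightarrow> \<bar>h y k\<bar> < \<eta>)"
      by (intro exI[of _ Ov]) (auto simp: dist_real_def)
  qed
  from bchoice[OF this] obtain Ov where Ov: "\<forall>k\<in>G. open (Ov k) \<and> 0 \<in> Ov k \<and> (\<forall>y\<in>span A. y \<in> Ov k \<longrightarrow> \<bar>h y k\<bar> < \<eta>)"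
    by (elim exE)
  define U where "U = UNIV \<inter> (\<Inter>k\<in>G. Ov k)"
  have "open U" unfolding U_def using fG Ov by (intro open_Int open_INT) auto
  moreover have "0 \<in> U" unfolding U_def using Ov by auto
  ultimately have nU: "nbhd0 U" unfolding nbhd0_def by blast
  have main: "\<forall>a\<in>H. r a *\<^sub>R a \<in> W"
    if H: "finite H" "H \<subseteq> A" "(\<Sum>a\<in>H. r a *\<^sub>R a) \<in> U" for H and r :: "'a \<Rightarrow> real"
  proof
    fix a assume aH: "a \<in> H"
    define x where "x = (\<Sum>a\<in>H. r a *\<^sub>R a)"
    have "\<bar>f (r a *\<^sub>R a)\<bar> < \<epsilon>" if fF: "f \<in> F" for f
    proof (cases "a \<in> G")
      case False
      then have "f a = 0" using aH H(2) fF unfolding G_def by auto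
      then show ?thesis using F(3) linear_cmul[OF clf_linear, of f] F(2) fF by simp
    next
      case True
      define r' where "r' b = (if b \<in> H then r b else 0)" for b
      have r'S: "r' \<in> fin_supp A" unfolding r'_def by (rule fin_supp_restrict[OF H(1,2)])
      have "R_sum_map r' = (\<Sum>b\<in>H. r' b *\<^sub>R b)" by (rule R_sum_map_eq[OF H(1)]) (auto simp: r'_def)
      also have "\<dots> = x" unfolding x_def r'_def by simp
      finally have Rx: "R_sum_map r' = x" .
      have xS: "x \<in> span A" unfolding x_def using H(2) by (intro span_sum span_scale span_base) auto
      have "x \<in> Ov a" using H(3) True unfolding U_def x_def by auto
      then have "\<bar>h x a\<bar> < \<eta>" using Ov True xS by auto
      moreover have "h x a = r a" using hR[OF r'S] Rx aH unfolding r'_def by auto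
      ultimately have ra: "\<bar>r a\<bar> \<le> \<eta>" by simp
      have fc: "cont_lin_functional f" using F(2) fF by auto
      have "\<bar>f (r a *\<^sub>R a)\<bar> = \<bar>r a\<bar> * \<bar>f a\<bar>" using linear_cmul[OF clf_linear[OF fc]] by (simp add: abs_mult)
      also have "\<dots> \<le> \<eta> * C" using ra Cb[OF fF True] \<eta>0 by (intro mult_mono) auto
      also have "\<dots> < \<epsilon>" by (rule \<eta>C)
      finally show ?thesis .
    qed
    then show "r a *\<^sub>R a \<in> W" using F(4) by blast
  qed
  show "\<exists>U. nbhd0 U \<and> (\<forall>F r. finite F \<and> F \<subseteq> A \<and> (\<Sum>a\<in>F. r a *\<^sub>R a) \<in> U \<longrightarrow> (\<forall>a\<in>F. r a *\<^sub>R a \<in> W))"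
    using nU main by (intro exI[of _ U] conjI allI impI) auto
qed


lemma Z_iso_indep:
  fixes A :: "'a::{real_vector,topological_space} set"
  assumes weak: "weak_topology_tvs TYPE('a)" and iso: "Z_sum_iso A"
  shows "top_indep A"
  unfolding top_indep_def
proof (intro allI impI)
  have fs: "FinSupp A" by (rule Z_iso_finsupp[OF iso])
  obtain h where hc: "continuous_map (top_of_set (int_span A)) (Z_fin_top A) h"
    and hR: "\<And>r. r \<in> fin_supp A \<Longrightarrow> h (Z_sum_map r) = r"
    using Z_iso_maps[OF iso] by metis
  fix W :: "'a set" assume nW: "nbhd0 W"
  obtain F \<epsilon> where F: "finite F" "\<forall>f\<in>F. cont_lin_functional f" "\<epsilon> > 0" "{y. \<forall>f\<in>F. \<bar>f y\<bar> < \<epsilon>} \<subseteq> W"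
    using nbhd0_basis[OF weak nW] by (elim exE conjE)
  define G where "G = (\<Union>f\<in>F. {a\<in>A. f a \<noteq> 0})"
  have fG: "finite G" unfolding G_def using F(1,2) fs unfolding FinSupp_def by auto
  have GA: "G \<subseteq> A" unfolding G_def by auto
  define z0 :: "'a \<Rightarrow> int" where "z0 = (\<lambda>_. 0)"
  have z0S: "z0 \<in> fin_supp A" unfolding z0_def fin_supp_def by simp
  have Z0: "Z_sum_map z0 = 0" unfolding z0_def Z_sum_map_def by simp
  then have h0: "h 0 = z0" using hR[OF z0S] by simp
  have in0: "0 \<in> int_span A" using Z_sum_map_image[of A] Z0 z0S by force
  let ?Tc = "\<lambda>a. if a \<in> A then discrete_topology UNIV else discrete_topology {0::int}"
  have coord: "continuous_map (top_of_set (int_span A)) (discrete_topology UNIV) (\<lambda>y. h y k)" if kA: "k \<in> A" for k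
  proof -
    have "continuous_map (top_of_set (int_span A)) (product_topology ?Tc UNIV) h"
      using hc unfolding Z_fin_top_def by (rule continuous_map_into_fulltopology)
    then have "continuous_map (top_of_set (int_span A)) (?Tc k) (\<lambda>y. h y k)"
      unfolding continuous_map_componentwise_UNIV by blast
    then show ?thesis using kA by simp
  qed
  have "\<forall>k\<in>G. \<exists>Ov. open Ov \<and> 0 \<in> Ov \<and> (\<forall>y\<in>int_span A. y \<in> Ov \<longrightarrow> h y k = 0)"
  proof
    fix k assume "k \<in> G"
    then have kA: "k \<in> A" using GA by auto
    have "openin (top_of_set (int_span A)) {y \<in> topspace (top_of_set (int_span A)). h y k \<in> {0}}"
      by (rule openin_continuous_map_preimage[OF coord[OF kA]]) simp
    then obtain T where T: "open T" "{y \<in> int_span A. h y k \<in> {0}} = int_span A \<inter> T"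
      unfolding openin_open by auto
    have "0 \<in> {y \<in> int_span A. h y k \<in> {0}}" using in0 h0 unfolding z0_def by simp
    then have "0 \<in> T" unfolding T(2) by simp
    moreover have "\<forall>y\<in>int_span A. y \<in> T \<longrightarrow> h y k = 0"
    proof (intro ballI impI)
      fix y assume "y \<in> int_span A" "y \<in> T"
      then have "y \<in> {y \<in> int_span A. h y k \<in> {0}}" unfolding T(2) by simp
      then show "h y k = 0" by simp
    qed
    ultimately show "\<exists>Ov. open Ov \<and> 0 \<in> Ov \<and> (\<forall>y\<in>int_span A. y \<in> Ov \<longrightarrow> h y k = 0)"
      using T(1) by (intro exI[of _ T] conjI)
  qed
  from bchoice[OF this] obtain Ov where Ov: "\<forall>k\<in>G. open (Ov k) \<and> 0 \<in> Ov k \<and> (\<forall>y\<in>int_span A. y \<in> Ov k \<longrightarrow> h y k = 0)"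
    by (elim exE)
  define U where "U = UNIV \<inter> (\<Inter>k\<in>G. Ov k)"
  have "open U" unfolding U_def using fG Ov by (intro open_Int open_INT) auto
  moreover have "0 \<in> U" unfolding U_def using Ov by auto
  ultimately have nU: "nbhd0 U" unfolding nbhd0_def by blast
  have main: "\<forall>a\<in>H. of_int (z a) *\<^sub>R a \<in> W"
    if H: "finite H" "H \<subseteq> A" "(\<Sum>a\<in>H. of_int (z a) *\<^sub>R a) \<in> U" for H and z :: "'a \<Rightarrow> int"
  proof
    fix a assume aH: "a \<in> H"
    define x where "x = (\<Sum>a\<in>H. of_int (z a) *\<^sub>R a)"
    show "of_int (z a) *\<^sub>R a \<in> W"
    proof (cases "a \<in> G")
      case False
      have "\<bar>f (of_int (z a) *\<^sub>R a)\<bar> < \<epsilon>" if fF: "f \<in> F" for f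
      proof -
        have "f a = 0" using False aH H(2) fF unfolding G_def by auto
        then show ?thesis using F(3) linear_cmul[OF clf_linear, of f] F(2) fF by simp
      qed
      then show ?thesis using F(4) by blast
    next
      case True
      define r' where "r' b = (if b \<in> H then z b else 0)" for b
      have r'S: "r' \<in> fin_supp A" unfolding r'_def by (rule fin_supp_restrict[OF H(1,2)])
      have "Z_sum_map r' = (\<Sum>b\<in>H. of_int (r' b) *\<^sub>R b)" by (rule Z_sum_map_eq[OF H(1)]) (auto simp: r'_def)
      also have "\<dots> = x" unfolding x_def r'_def by simp
      finally have Rx: "Z_sum_map r' = x" .
      have xS: "x \<in> int_span A" using Z_sum_map_image[of A] Rx r'S by force
      have "x \<in> Ov a" using H(3) True unfolding U_def x_def by auto
      then have "h x a = 0" using Ov True xS by auto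
      moreover have "h x a = z a" using hR[OF r'S] Rx aH unfolding r'_def by auto
      ultimately have "z a = 0" by simp
      then show ?thesis using nbhd0_has0[OF nW] by simp
    qed
  qed
  show "\<exists>U. nbhd0 U \<and> (\<forall>F z. finite F \<and> F \<subseteq> A \<and> (\<Sum>a\<in>F. of_int (z a) *\<^sub>R a) \<in> U \<longrightarrow> (\<forall>a\<in>F. of_int (z a) *\<^sub>R a \<in> W))"
    using nU main by (intro exI[of _ U] conjI allI impI) auto
qed


theorem theorem3p8:
  fixes A :: "'a::{real_vector,t2_space} set"
  assumes "tvs_ops_continuous TYPE('a)"
    and "weak_topology_tvs TYPE('a)"
    and "A \<subseteq> UNIV - {0}"
  shows "(top_lin_indep A \<longleftrightarrow> top_indep A) \<and>
         (top_indep A \<longleftrightarrow> abs_cauchy_summable A \<and> minimal_set A) \<and>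
         (abs_cauchy_summable A \<and> minimal_set A \<longleftrightarrow> Z_sum_iso A) \<and>
         (Z_sum_iso A \<longleftrightarrow> R_sum_iso A)"
proof -
  note weak = assms(2) and A0 = assms(3)
  have LI: "top_lin_indep A \<Longrightarrow> top_indep A" by (rule lin_imp_indep)
  have IP: "top_indep A \<Longrightarrow> abs_cauchy_summable A \<and> minimal_set A"
    using finsupp_imp_acs[OF weak indep_imp_finsupp[OF weak]] indep_imp_minimal[OF weak A0] by blast
  have PL: "abs_cauchy_summable A \<and> minimal_set A \<Longrightarrow> top_lin_indep A"
    using finsupp_min_imp_lin[OF weak acs_imp_finsupp] by blast
  have IF: "top_indep A \<Longrightarrow> FinSupp A" by (rule indep_imp_finsupp[OF weak])
  have IZ: "top_indep A \<Longrightarrow> Z_sum_iso A" using Z_iso_fwd[OF weak A0 IF] by blast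
  have LR: "top_lin_indep A \<Longrightarrow> R_sum_iso A" using R_iso_fwd[OF weak A0 IF[OF LI]] by blast
  have ZI: "Z_sum_iso A \<Longrightarrow> top_indep A" by (rule Z_iso_indep[OF weak])
  have RL: "R_sum_iso A \<Longrightarrow> top_lin_indep A" by (rule R_iso_lin[OF weak])
  show ?thesis using LI IP PL IZ LR ZI RL by blast
qed

end
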